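(* Let $\Gamma$ be an infinite finitely generated group. If $\Gamma$ is algorithmically finite, then, with respect to any finite set of generators, $\Gamma$ has unsolvable UB-generic Word Problem and therefore unsolvable generic Word Problem.
   Context: For a finite generating set $X$, $\mathbb F_X$ is the free group on $X$, $\pi:\mathbb F_X\to\Gamma$ the canonical epimorphism, $|\cdot|$ the reduced word length, $B_n=\{\omega\in\mathbb F_X:|\omega|\le n\}$. $\Gamma$ is algorithmically finite if there is no computable enumeration of an infinite set of words in $\mathbb F_X$ whose images under $\pi$ are pairwise distinct. $S\subset\mathbb F_X$ is UB-generic if $\limsup_{n\to\infty}\max_{\omega\in\mathbb F_X}\frac{|S\cap\omega B_n|}{|B_n|}=1$, and generic if $|S^c\cap B_n|/|B_n|\to0$. $\Gamma$ has solvable Word Problem on $S$ if there is a partial algorithm halting at least on every $\omega\in S$ and, whenever it halts, correctly deciding whether $\pi(\omega)$ is trivial; solvable UB-generic (resp. generic) Word Problem with respect to $X$ means solvable on some UB-generic (resp. generic) $S\subset\mathbb F_X$. *)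

theory Defs
  imports Complex_Main "HOL-Algebra.Generated_Groups" "HOL-Library.Nat_Bijection"
    "HOL-Library.Liminf_Limsup" "HOL-Library.Extended_Real"
begin

datatype recf = Zf | Sf | Proj nat | Comp recf "recf list" | Prec recf recf | Mn recf

inductive ev :: "recf \<Rightarrow> nat list \<Rightarrow> nat \<Rightarrow> bool" where
  ev_Z: "ev Zf xs 0"
| ev_S: "ev Sf (x # xs) (Suc x)"
| ev_Proj: "i < length xs \<Longrightarrow> ev (Proj i) xs (xs ! i)"
| ev_Comp: "list_all2 (\<lambda>h y. ev h xs y) hs ys \<Longrightarrow> ev f ys z \<Longrightarrow> ev (Comp f hs) xs z"
| ev_Prec0: "ev f xs y \<Longrightarrow> ev (Prec f h) (0 # xs) y"
| ev_PrecS: "ev (Prec f h) (n # xs) y \<Longrightarrow> ev h (n # y # xs) z \<Longrightarrow> ev (Prec f h) (Suc n # xs) z"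
| ev_Mn: "ev f (n # xs) 0 \<Longrightarrow> (\<forall>m<n. \<exists>y. ev f (m # xs) y \<and> y \<noteq> 0) \<Longrightarrow> ev (Mn f) xs n"

text \<open>A letter (i, True) is x_i, (i, False) is x_i^-1.\<close>
type_synonym letter = "nat \<times> bool"

definition cancels :: "letter \<Rightarrow> letter \<Rightarrow> bool" where
  "cancels a b \<longleftrightarrow> fst a = fst b \<and> snd a \<noteq> snd b"

fun reduced :: "letter list \<Rightarrow> bool" where
  "reduced [] = True"
| "reduced [a] = True"
| "reduced (a # b # w) = (\<not> cancels a b \<and> reduced (b # w))"

definition FX :: "nat \<Rightarrow> letter list set" where
  "FX k = {w. (\<forall>a\<in>set w. fst a < k) \<and> reduced w}"

definition ballF :: "nat \<Rightarrow> nat \<Rightarrow> letter list set" where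
  "ballF k n = {w \<in> FX k. length w \<le> n}"

fun push :: "letter \<Rightarrow> letter list \<Rightarrow> letter list" where
  "push a [] = [a]"
| "push a (b # w) = (if cancels a b then w else a # b # w)"

definition fmult :: "letter list \<Rightarrow> letter list \<Rightarrow> letter list" where
  "fmult u v = foldr push u v"

definition piG :: "('a, 'b) monoid_scheme \<Rightarrow> (nat \<Rightarrow> 'a) \<Rightarrow> letter list \<Rightarrow> 'a" where
  "piG G g w = foldr (\<lambda>a acc. (if snd a then g (fst a) else inv\<^bsub>G\<^esub> (g (fst a))) \<otimes>\<^bsub>G\<^esub> acc) w \<one>\<^bsub>G\<^esub>"

definition code :: "letter list \<Rightarrow> nat" where
  "code w = list_encode (map (\<lambda>a. 2 * fst a + (if snd a then 1 else 0)) w)"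

definition algorithmically_finite :: "('a, 'b) monoid_scheme \<Rightarrow> nat \<Rightarrow> (nat \<Rightarrow> 'a) \<Rightarrow> bool" where
  "algorithmically_finite G k g \<longleftrightarrow>
     \<not> (\<exists>f S. S \<subseteq> FX k \<and> infinite S \<and> inj_on (piG G g) S \<and>
             (\<forall>n. \<exists>y. ev f [n] y) \<and> {y. \<exists>n. ev f [n] y} = code ` S)"

definition UB_generic :: "nat \<Rightarrow> letter list set \<Rightarrow> bool" where
  "UB_generic k S \<longleftrightarrow> S \<subseteq> FX k \<and>
     limsup (\<lambda>n. SUP \<omega>\<in>FX k. ereal (real (card (S \<inter> fmult \<omega> ` ballF k n)) / real (card (ballF k n)))) = 1"

definition generic :: "nat \<Rightarrow> letter list set \<Rightarrow> bool" where
  "generic k S \<longleftrightarrow> S \<subseteq> FX k \<and>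
     (\<lambda>n. real (card ((FX k - S) \<inter> ballF k n)) / real (card (ballF k n))) \<longlonglongrightarrow> 0"

definition WP_solvable_on :: "('a, 'b) monoid_scheme \<Rightarrow> nat \<Rightarrow> (nat \<Rightarrow> 'a) \<Rightarrow> letter list set \<Rightarrow> bool" where
  "WP_solvable_on G k g S \<longleftrightarrow> (\<exists>f.
     (\<forall>w\<in>S. \<exists>y. ev f [code w] y) \<and>
     (\<forall>w\<in>FX k. \<forall>y. ev f [code w] y \<longrightarrow> (y = 0 \<longleftrightarrow> piG G g w = \<one>\<^bsub>G\<^esub>)))"

definition UB_generic_WP_solvable :: "('a, 'b) monoid_scheme \<Rightarrow> nat \<Rightarrow> (nat \<Rightarrow> 'a) \<Rightarrow> bool" where
  "UB_generic_WP_solvable G k g \<longleftrightarrow> (\<exists>S. UB_generic k S \<and> WP_solvable_on G k g S)"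

definition generic_WP_solvable :: "('a, 'b) monoid_scheme \<Rightarrow> nat \<Rightarrow> (nat \<Rightarrow> 'a) \<Rightarrow> bool" where
  "generic_WP_solvable G k g \<longleftrightarrow> (\<exists>S. generic k S \<and> WP_solvable_on G k g S)"

end

theory Submission
  imports Defs
begin


inductive_cases evZ_inv: "ev Zf xs y"
inductive_cases evS_inv: "ev Sf xs y"
inductive_cases evP_inv: "ev (Proj i) xs y"
inductive_cases evC_inv: "ev (Comp f hs) xs y"
inductive_cases evPr_inv: "ev (Prec f h) xs y"
inductive_cases evM_inv: "ev (Mn f) xs y"

lemma ev_det: "ev e xs y \<Longrightarrow> ev e xs y' \<Longrightarrow> y = y'"
proof (induction arbitrary: y' rule: ev.induct)
  case (ev_Z xs) then show ?case by (auto elim: evZ_inv)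
next
  case (ev_S x xs) then show ?case by (auto elim: evS_inv)
next
  case (ev_Proj i xs) then show ?case by (auto elim: evP_inv)
next
  case (ev_Comp xs hs ys f z)
  from ev_Comp.prems obtain ys' where a: "list_all2 (\<lambda>h y. ev h xs y) hs ys'" and b: "ev f ys' y'"
    by (auto elim: evC_inv)
  have "ys = ys'" using ev_Comp.IH(1) a
  proof (induction hs arbitrary: ys ys')
    case Nil then show ?case by auto
  next
    case (Cons h hs)
    then obtain y ys1 y' ys1' where "ys = y # ys1" "ys' = y' # ys1'"
      by (auto simp: list_all2_Cons1)
    with Cons show ?case by auto
  qed
  then show ?case using ev_Comp.IH(2) b by auto
next
  case (ev_Prec0 f xs y h)
  from ev_Prec0.prems show ?case by (rule evPr_inv) (use ev_Prec0.IH in auto)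
next
  case (ev_PrecS f h n xs y z)
  from ev_PrecS.prems show ?case
  proof (rule evPr_inv)
    fix n' xs' y1 assume a: "Suc n # xs = Suc n' # xs'" "ev (Prec f h) (n' # xs') y1" "ev h (n' # y1 # xs') y'"
    then have "y1 = y" using ev_PrecS.IH(1) by auto
    then show ?thesis using a ev_PrecS.IH(2) by auto
  qed auto
next
  case (ev_Mn f n xs)
  from ev_Mn.prems obtain n' where e: "y' = n'" "ev f (n' # xs) 0"
    "\<forall>m<n'. \<exists>y. ev f (m # xs) y \<and> y \<noteq> 0" by (auto elim: evM_inv)
  show ?case
  proof (rule ccontr)
    assume "n \<noteq> y'"
    then consider "n < n'" | "n' < n" using e by linarith
    then show False
    proof cases
      case 1 then obtain y where "ev f (n # xs) y" "y \<noteq> 0" using e by auto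
      then show False using ev_Mn.IH(1) by auto
    next
      case 2 then show False using ev_Mn.IH(2) e by auto
    qed
  qed
qed

definition computable :: "nat \<Rightarrow> (nat list \<Rightarrow> nat) \<Rightarrow> bool" where
  "computable n h \<longleftrightarrow> (\<exists>e. \<forall>xs. length xs = n \<longrightarrow> ev e xs (h xs))"

lemma computable_cong:
  "computable n f \<Longrightarrow> (\<And>xs. length xs = n \<Longrightarrow> f xs = g xs) \<Longrightarrow> computable n g"
  unfolding computable_def by metis

fun constf :: "nat \<Rightarrow> recf" where
  "constf 0 = Zf"
| "constf (Suc c) = Comp Sf [constf c]"

lemma ev_constf: "ev (constf c) xs c"
  by (induction c) (auto intro!: ev.intros)

lemma computable_const[intro]: "computable n (\<lambda>_. c)"
  unfolding computable_def using ev_constf by blast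

lemma computable_proj: "i < n \<Longrightarrow> computable n (\<lambda>xs. xs ! i)"
  unfolding computable_def by (auto intro!: ev.intros exI[of _ "Proj i"])

lemma computable_list:
  assumes "\<forall>g\<in>set gs. computable n g"
  shows "\<exists>es. list_all2 (\<lambda>e g. \<forall>xs. length xs = n \<longrightarrow> ev e xs (g xs)) es gs"
  using assms
proof (induction gs)
  case Nil then show ?case by auto
next
  case (Cons g gs)
  then obtain es where "list_all2 (\<lambda>e g. \<forall>xs. length xs = n \<longrightarrow> ev e xs (g xs)) es gs" by auto
  moreover obtain e where "\<forall>xs. length xs = n \<longrightarrow> ev e xs (g xs)" using Cons.prems computable_def by auto
  ultimately show ?case by (auto intro!: exI[of _ "e # es"])
qed

lemma computable_compose:
  assumes "computable m f" "length gs = m" "\<forall>g\<in>set gs. computable n g"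
  shows "computable n (\<lambda>xs. f (map (\<lambda>g. g xs) gs))"
proof -
  obtain ef where ef: "\<forall>xs. length xs = m \<longrightarrow> ev ef xs (f xs)" using assms(1) computable_def by auto
  obtain es where es: "list_all2 (\<lambda>e g. \<forall>xs. length xs = n \<longrightarrow> ev e xs (g xs)) es gs"
    using computable_list assms(3) by blast
  have "ev (Comp ef es) xs (f (map (\<lambda>g. g xs) gs))" if "length xs = n" for xs
  proof (rule ev_Comp)
    show "list_all2 (\<lambda>h y. ev h xs y) es (map (\<lambda>g. g xs) gs)"
      using es that by (auto simp: list_all2_map2 elim!: list_all2_mono)
    show "ev ef (map (\<lambda>g. g xs) gs) (f (map (\<lambda>g. g xs) gs))" using ef assms(2) by auto
  qed
  then show ?thesis unfolding computable_def by blast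
qed

lemma computable_rec0:
  assumes "computable n z" "computable (Suc (Suc n)) s"
  shows "computable (Suc n) (\<lambda>xs. rec_nat (z (tl xs)) (\<lambda>i y. s (i # y # tl xs)) (hd xs))"
proof -
  obtain ez where ez: "\<forall>xs. length xs = n \<longrightarrow> ev ez xs (z xs)" using assms(1) computable_def by auto
  obtain es where es: "\<forall>xs. length xs = Suc (Suc n) \<longrightarrow> ev es xs (s xs)" using assms(2) computable_def by auto
  have "ev (Prec ez es) (x # ys) (rec_nat (z ys) (\<lambda>i y. s (i # y # ys)) x)" if "length ys = n" for x ys
    using that by (induction x) (auto intro!: ev.intros ez[rule_format] es[rule_format])
  then show ?thesis unfolding computable_def
    by (auto intro!: exI[of _ "Prec ez es"] simp: length_Suc_conv)
qed

lemma computable_rec: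
  assumes "computable n z" "computable (Suc (Suc n)) s" "computable n m"
  shows "computable n (\<lambda>xs. rec_nat (z xs) (\<lambda>i y. s (i # y # xs)) (m xs))"
proof -
  have c: "computable n (\<lambda>xs. (\<lambda>xs. rec_nat (z (tl xs)) (\<lambda>i y. s (i # y # tl xs)) (hd xs))
      (map (\<lambda>g. g xs) (m # map (\<lambda>i xs. xs ! i) [0..<n])))"
    by (rule computable_compose[OF computable_rec0[OF assms(1,2)]])
       (auto intro: assms(3) computable_proj)
  show ?thesis
    by (rule computable_cong[OF c]) (simp add: map_nth[unfolded comp_def] map_upt_eqI)
qed

lemma computable_lift1:
  assumes "computable 1 (\<lambda>v. F (v ! 0))" "computable n a"
  shows "computable n (\<lambda>xs. F (a xs))"
  using computable_compose[OF assms(1), of "[a]" n] assms(2) by simp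

lemma computable_lift2:
  assumes "computable 2 (\<lambda>v. F (v ! 0) (v ! 1))" "computable n a" "computable n b"
  shows "computable n (\<lambda>xs. F (a xs) (b xs))"
  using computable_compose[OF assms(1), of "[a, b]" n] assms(2,3) by simp

lemma computable_lift3:
  assumes "computable 3 (\<lambda>v. F (v ! 0) (v ! 1) (v ! 2))" "computable n a" "computable n b" "computable n c"
  shows "computable n (\<lambda>xs. F (a xs) (b xs) (c xs))"
  using computable_compose[OF assms(1), of "[a, b, c]" n] assms(2-4) by (simp add: numeral_3_eq_3)


lemma c_suc_base: "computable 1 (\<lambda>v. Suc (v ! 0))"
  unfolding computable_def by (auto intro!: exI[of _ Sf] ev.intros simp: length_Suc_conv)

lemma c_suc[intro]: "computable n a \<Longrightarrow> computable n (\<lambda>xs. Suc (a xs))"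
  by (rule computable_lift1[OF c_suc_base])

lemma c_proj[intro]: "i < n \<Longrightarrow> computable n (\<lambda>xs. xs ! i)"
  by (rule computable_proj)

lemma c_rec[intro]:
  "computable n z \<Longrightarrow> computable (Suc (Suc n)) s \<Longrightarrow> computable n m \<Longrightarrow>
   computable n (\<lambda>xs. rec_nat (z xs) (\<lambda>i y. s (i # y # xs)) (m xs))"
  by (rule computable_rec)

lemma rec_add: "rec_nat a (\<lambda>i y. Suc y) b = a + (b::nat)"
  by (induction b) auto
lemma c_add_base: "computable 2 (\<lambda>v. v ! 0 + v ! 1)"
proof -
  have "computable 2 (\<lambda>v. rec_nat (v ! 0) (\<lambda>i y. (\<lambda>ys. Suc (ys ! 1)) (i # y # v)) (v ! 1))"
    by (intro c_rec c_suc c_proj) auto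
  then show ?thesis by (simp add: rec_add)
qed
lemma c_add[intro]: "computable n a \<Longrightarrow> computable n b \<Longrightarrow> computable n (\<lambda>xs. a xs + b xs)"
  by (rule computable_lift2[OF c_add_base])

lemma rec_pred: "rec_nat 0 (\<lambda>i y. i) b = b - (1::nat)"
  by (induction b) auto
lemma c_pred_base: "computable 1 (\<lambda>v. v ! 0 - 1)"
proof -
  have "computable 1 (\<lambda>v. rec_nat 0 (\<lambda>i y. (\<lambda>ys. ys ! 0) (i # y # v)) (v ! 0))"
    by (intro c_rec c_proj computable_const) auto
  then show ?thesis by (simp add: rec_pred)
qed
lemma c_pred[intro]: "computable n a \<Longrightarrow> computable n (\<lambda>xs. a xs - 1)"
  by (rule computable_lift1[OF c_pred_base])

lemma rec_sub: "rec_nat a (\<lambda>i y. y - Suc 0) b = a - (b::nat)"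
  by (induction b) auto
lemma c_sub_base: "computable 2 (\<lambda>v. v ! 0 - v ! 1)"
proof -
  have "computable 2 (\<lambda>v. rec_nat (v ! 0) (\<lambda>i y. (\<lambda>ys. ys ! 1 - 1) (i # y # v)) (v ! 1))"
    by (intro c_rec c_pred c_proj) auto
  then show ?thesis by (simp add: rec_sub)
qed
lemma c_sub[intro]: "computable n a \<Longrightarrow> computable n b \<Longrightarrow> computable n (\<lambda>xs. a xs - b xs)"
  by (rule computable_lift2[OF c_sub_base])

lemma rec_mult: "rec_nat 0 (\<lambda>i y. y + a) b = a * (b::nat)"
  by (induction b) auto
lemma c_mult_base: "computable 2 (\<lambda>v. v ! 0 * v ! 1)"
proof -
  have "computable 2 (\<lambda>v. rec_nat 0 (\<lambda>i y. (\<lambda>ys. ys ! 1 + ys ! 2) (i # y # v)) (v ! 1))"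
    by (intro c_rec c_add c_proj computable_const) auto
  then show ?thesis by (simp add: rec_mult)
qed
lemma c_mult[intro]: "computable n a \<Longrightarrow> computable n b \<Longrightarrow> computable n (\<lambda>xs. a xs * b xs)"
  by (rule computable_lift2[OF c_mult_base])

lemma c_rec2[intro]:
  assumes "computable n z" "computable (Suc (Suc n)) (\<lambda>ys. S (ys ! 0) (ys ! 1) (drop 2 ys))" "computable n m"
  shows "computable n (\<lambda>xs. rec_nat (z xs) (\<lambda>i y. S i y xs) (m xs))"
  using computable_rec[OF assms] by simp

lemma c_proj_drop[intro]: "Suc (Suc i) < n \<Longrightarrow> computable n (\<lambda>ys. drop 2 ys ! i)"
proof -
  assume "Suc (Suc i) < n"
  then have "computable n (\<lambda>ys. ys ! (Suc (Suc i)))" by (rule computable_proj)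
  then show ?thesis by (rule computable_cong) (use \<open>Suc (Suc i) < n\<close> in \<open>simp add: nth_drop\<close>)
qed

definition cpred :: "nat \<Rightarrow> (nat list \<Rightarrow> bool) \<Rightarrow> bool" where
  "cpred n P \<longleftrightarrow> computable n (\<lambda>xs. if P xs then 1 else 0)"

lemma c_if[intro]:
  assumes "cpred n P" "computable n a" "computable n b"
  shows "computable n (\<lambda>xs. if P xs then a xs else b xs)"
proof -
  have "computable n (\<lambda>xs. (if P xs then 1 else 0) * a xs + (1 - (if P xs then 1 else 0)) * b xs)"
    using assms unfolding cpred_def by (intro c_add c_mult c_sub computable_const) auto
  then show ?thesis by (rule computable_cong) auto
qed

lemma cp_zero[intro]: "computable n a \<Longrightarrow> cpred n (\<lambda>xs. a xs = 0)"
proof -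
  assume a: "computable n a"
  have "computable n (\<lambda>xs. 1 - a xs)" using a by (intro c_sub computable_const)
  then show ?thesis unfolding cpred_def by (rule computable_cong) auto
qed

lemma cp_le[intro]: "computable n a \<Longrightarrow> computable n b \<Longrightarrow> cpred n (\<lambda>xs. a xs \<le> b xs)"
proof -
  assume "computable n a" "computable n b"
  then have "cpred n (\<lambda>xs. a xs - b xs = 0)" by (intro cp_zero c_sub)
  then show ?thesis unfolding cpred_def by (rule computable_cong) auto
qed

lemma cp_less[intro]: "computable n a \<Longrightarrow> computable n b \<Longrightarrow> cpred n (\<lambda>xs. a xs < b xs)"
proof -
  assume "computable n a" "computable n b"
  then have "cpred n (\<lambda>xs. Suc (a xs) \<le> b xs)" by (intro cp_le c_suc)
  then show ?thesis unfolding cpred_def by (rule computable_cong) auto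
qed

lemma cp_eq[intro]: "computable n a \<Longrightarrow> computable n b \<Longrightarrow> cpred n (\<lambda>xs. a xs = b xs)"
proof -
  assume "computable n a" "computable n b"
  then have "cpred n (\<lambda>xs. (a xs - b xs) + (b xs - a xs) = 0)" by (intro cp_zero c_sub c_add)
  then show ?thesis unfolding cpred_def by (rule computable_cong) auto
qed

lemma cp_not[intro]: "cpred n P \<Longrightarrow> cpred n (\<lambda>xs. \<not> P xs)"
proof -
  assume "cpred n P"
  then have "computable n (\<lambda>xs. 1 - (if P xs then 1 else 0))"
    unfolding cpred_def by (intro c_sub computable_const)
  then show ?thesis unfolding cpred_def by (rule computable_cong) auto
qed

lemma cp_and[intro]: "cpred n P \<Longrightarrow> cpred n Q \<Longrightarrow> cpred n (\<lambda>xs. P xs \<and> Q xs)"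
proof -
  assume "cpred n P" "cpred n Q"
  then have "computable n (\<lambda>xs. (if P xs then 1 else 0) * (if Q xs then 1 else 0))"
    unfolding cpred_def by (intro c_mult)
  then show ?thesis unfolding cpred_def by (rule computable_cong) auto
qed

lemma cp_or[intro]: "cpred n P \<Longrightarrow> cpred n Q \<Longrightarrow> cpred n (\<lambda>xs. P xs \<or> Q xs)"
proof -
  assume "cpred n P" "cpred n Q"
  then have "cpred n (\<lambda>xs. \<not> (\<not> P xs \<and> \<not> Q xs))" by (intro cp_not cp_and)
  then show ?thesis by simp
qed

lemma cp_const[intro]: "cpred n (\<lambda>_. b)"
  unfolding cpred_def by (cases b) auto


declare list_encode.simps(2)[simp del]

lemma c_funpow_base:
  assumes "computable 1 (\<lambda>v. f (v ! 0))" "computable n z" "computable n m"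
  shows "computable n (\<lambda>xs. (f ^^ m xs) (z xs))"
proof -
  have s: "computable (Suc (Suc n)) (\<lambda>ys. f (ys ! 1))"
    by (rule computable_lift1[OF assms(1)]) auto
  have "computable n (\<lambda>xs. rec_nat (z xs) (\<lambda>i y. (\<lambda>ys. f (ys ! 1)) (i # y # xs)) (m xs))"
    by (rule computable_rec[OF assms(2) s assms(3)])
  moreover have "rec_nat a (\<lambda>i y. f y) k = (f ^^ k) a" for a k
    by (induction k) auto
  ultimately show ?thesis by simp
qed

definition par :: "nat \<Rightarrow> nat" where "par x = x mod 2"
lemma par_rec: "rec_nat 0 (\<lambda>i y. 1 - y) x = x mod (2::nat)"
  by (induction x) (auto simp: mod_Suc)
lemma c_par[intro]: "computable n a \<Longrightarrow> computable n (\<lambda>xs. a xs mod 2)"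
proof -
  have "computable 1 (\<lambda>v. rec_nat 0 (\<lambda>i y. (\<lambda>ys. 1 - ys ! 1) (i # y # v)) (v ! 0))"
    by (intro c_rec c_sub c_proj computable_const) auto
  then have "computable 1 (\<lambda>v. v ! 0 mod 2)" by (simp add: par_rec[simplified])
  then show "computable n a \<Longrightarrow> computable n (\<lambda>xs. a xs mod 2)" by (rule computable_lift1)
qed

lemma tri_rec: "rec_nat 0 (\<lambda>i y. y + Suc i) x = triangle x"
  by (induction x) auto
lemma c_tri[intro]: "computable n a \<Longrightarrow> computable n (\<lambda>xs. triangle (a xs))"
proof -
  have "computable 1 (\<lambda>v. rec_nat 0 (\<lambda>i y. y + Suc i) (v ! 0))"
    by (intro c_rec2 c_add c_suc c_proj computable_const) auto
  then have "computable 1 (\<lambda>v. triangle (v ! 0))" by (simp only: tri_rec)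
  then show "computable n a \<Longrightarrow> computable n (\<lambda>xs. triangle (a xs))" by (rule computable_lift1)
qed

definition pe :: "nat \<Rightarrow> nat \<Rightarrow> nat" where "pe a b = prod_encode (a, b)"
lemma c_pe[intro]: "computable n a \<Longrightarrow> computable n b \<Longrightarrow> computable n (\<lambda>xs. pe (a xs) (b xs))"
proof -
  have "computable 2 (\<lambda>v. triangle (v ! 0 + v ! 1) + v ! 0)"
    by (intro c_add c_tri c_proj) auto
  then have "computable 2 (\<lambda>v. pe (v ! 0) (v ! 1))" by (simp add: pe_def prod_encode_def)
  then show "computable n a \<Longrightarrow> computable n b \<Longrightarrow> computable n (\<lambda>xs. pe (a xs) (b xs))"
    by (rule computable_lift2)
qed

definition tri_root :: "nat \<Rightarrow> nat" where
  "tri_root n = rec_nat 0 (\<lambda>j r. if triangle (Suc j) \<le> n then Suc j else r) n"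

lemma tri_root_aux:
  "triangle (rec_nat 0 (\<lambda>j r. if triangle (Suc j) \<le> n then Suc j else r) m) \<le> n \<and>
   (\<forall>i. rec_nat 0 (\<lambda>j r. if triangle (Suc j) \<le> n then Suc j else r) m < i \<and> i \<le> m \<longrightarrow> n < triangle i)"
proof (induction m)
  case 0 then show ?case by auto
next
  case (Suc m)
  then show ?case by (auto simp del: triangle_Suc simp: le_Suc_eq)
qed

lemma tri_root: "triangle (tri_root n) \<le> n" "n < triangle (Suc (tri_root n))"
proof -
  show "triangle (tri_root n) \<le> n" using tri_root_aux[of n n] by (simp add: tri_root_def)
  show "n < triangle (Suc (tri_root n))"
  proof (cases "tri_root n < n")
    case True then show ?thesis using tri_root_aux[of n n] by (auto simp: tri_root_def simp del: triangle_Suc)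
  next
    case False
    then have "n \<le> tri_root n" by simp
    then show ?thesis by simp
  qed
qed

lemma prod_decode_tri: "prod_decode n = (n - triangle (tri_root n), tri_root n - (n - triangle (tri_root n)))"
proof -
  let ?s = "tri_root n"
  have a: "n - triangle ?s \<le> ?s" using tri_root(2)[of n] by simp
  have "prod_encode (n - triangle ?s, ?s - (n - triangle ?s)) = n"
    using a tri_root by (simp add: prod_encode_def)
  then show ?thesis by (metis prod_encode_inverse)
qed

lemma c_tri_root[intro]: "computable n a \<Longrightarrow> computable n (\<lambda>xs. tri_root (a xs))"
proof -
  have "computable 1 (\<lambda>v. rec_nat 0 (\<lambda>j r. if triangle (Suc j) \<le> v ! 0 then Suc j else r) (v ! 0))"
    by (intro c_rec2 c_if cp_le c_tri c_suc c_proj c_proj_drop computable_const) auto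
  then have "computable 1 (\<lambda>v. tri_root (v ! 0))" by (simp only: tri_root_def)
  then show "computable n a \<Longrightarrow> computable n (\<lambda>xs. tri_root (a xs))" by (rule computable_lift1)
qed

definition pfst :: "nat \<Rightarrow> nat" where "pfst n = fst (prod_decode n)"
definition psnd :: "nat \<Rightarrow> nat" where "psnd n = snd (prod_decode n)"

lemma c_pfst[intro]: "computable n a \<Longrightarrow> computable n (\<lambda>xs. pfst (a xs))"
proof -
  have "computable 1 (\<lambda>v. v ! 0 - triangle (tri_root (v ! 0)))" by (intro c_sub c_tri c_tri_root c_proj) auto
  then have "computable 1 (\<lambda>v. pfst (v ! 0))" by (simp add: pfst_def prod_decode_tri)
  then show "computable n a \<Longrightarrow> computable n (\<lambda>xs. pfst (a xs))" by (rule computable_lift1)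
qed

lemma c_psnd[intro]: "computable n a \<Longrightarrow> computable n (\<lambda>xs. psnd (a xs))"
proof -
  have "computable 1 (\<lambda>v. tri_root (v ! 0) - (v ! 0 - triangle (tri_root (v ! 0))))"
    by (intro c_sub c_tri c_tri_root c_proj) auto
  then have "computable 1 (\<lambda>v. psnd (v ! 0))" by (simp add: psnd_def prod_decode_tri)
  then show "computable n a \<Longrightarrow> computable n (\<lambda>xs. psnd (a xs))" by (rule computable_lift1)
qed

lemma pfst_pe[simp]: "pfst (pe a b) = a" and psnd_pe[simp]: "psnd (pe a b) = b"
  by (auto simp: pfst_def psnd_def pe_def)

definition chd :: "nat \<Rightarrow> nat" where "chd c = pfst (c - 1)"
definition ctl :: "nat \<Rightarrow> nat" where "ctl c = psnd (c - 1)"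
definition ccons :: "nat \<Rightarrow> nat \<Rightarrow> nat" where "ccons x c = Suc (pe x c)"

lemma chd_enc[simp]: "chd (list_encode (x # xs)) = x"
  and ctl_enc[simp]: "ctl (list_encode (x # xs)) = list_encode xs"
  and ccons_enc[simp]: "ccons x (list_encode xs) = list_encode (x # xs)"
  by (auto simp: chd_def ctl_def ccons_def pe_def pfst_def psnd_def list_encode.simps)

lemma enc_zero[simp]: "list_encode xs = 0 \<longleftrightarrow> xs = []"
  by (cases xs) (auto simp: list_encode.simps)

lemma c_chd[intro]: "computable n a \<Longrightarrow> computable n (\<lambda>xs. chd (a xs))"
  unfolding chd_def by (intro c_pfst c_pred)
lemma c_ctl[intro]: "computable n a \<Longrightarrow> computable n (\<lambda>xs. ctl (a xs))"
  unfolding ctl_def by (intro c_psnd c_pred)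
lemma c_ccons[intro]: "computable n a \<Longrightarrow> computable n b \<Longrightarrow> computable n (\<lambda>xs. ccons (a xs) (b xs))"
  unfolding ccons_def by (intro c_suc c_pe)

lemma length_le_enc: "length xs \<le> list_encode xs"
proof (induction xs)
  case (Cons x xs)
  then show ?case using le_prod_encode_2[of "list_encode xs" x] by (simp add: list_encode.simps)
qed simp

definition rm_step :: "(nat \<Rightarrow> nat) \<Rightarrow> nat \<Rightarrow> nat" where
  "rm_step f st = (if pfst st = 0 then st else pe (ctl (pfst st)) (ccons (f (chd (pfst st))) (psnd st)))"

lemma rm_step_iter:
  "length xs \<le> m \<Longrightarrow> (rm_step f ^^ m) (pe (list_encode xs) (list_encode acc)) =
     pe 0 (list_encode (rev (map f xs) @ acc))"
proof (induction xs arbitrary: m acc)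
  case Nil
  have "(rm_step f ^^ m) (pe 0 (list_encode acc)) = pe 0 (list_encode acc)" for m
    by (induction m) (auto simp: rm_step_def)
  then show ?case by simp
next
  case (Cons x xs)
  then obtain m' where m: "m = Suc m'" "length xs \<le> m'" by (cases m) auto
  have "(rm_step f ^^ m) (pe (list_encode (x # xs)) (list_encode acc)) =
        (rm_step f ^^ m') (pe (list_encode xs) (list_encode (f x # acc)))"
    unfolding m(1) funpow_Suc_right comp_def by (simp add: rm_step_def)
  also have "\<dots> = pe 0 (list_encode (rev (map f xs) @ f x # acc))" using Cons.IH m(2) by simp
  finally show ?case by simp
qed

definition crevmap :: "(nat \<Rightarrow> nat) \<Rightarrow> nat \<Rightarrow> nat \<Rightarrow> nat" where
  "crevmap f a b = psnd ((rm_step f ^^ a) (pe a b))"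

lemma crevmap_enc[simp]: "crevmap f (list_encode xs) (list_encode acc) = list_encode (rev (map f xs) @ acc)"
  unfolding crevmap_def using rm_step_iter[OF length_le_enc] by (metis psnd_pe)

lemma c_crevmap[intro]:
  assumes f: "computable 1 (\<lambda>v. f (v ! 0))"
  shows "computable n a \<Longrightarrow> computable n b \<Longrightarrow> computable n (\<lambda>xs. crevmap f (a xs) (b xs))"
proof -
  have fl: "computable m g \<Longrightarrow> computable m (\<lambda>xs. f (g xs))" for m g by (rule computable_lift1[OF f])
  have "computable 1 (\<lambda>v. rm_step f (v ! 0))" unfolding rm_step_def
    by (intro c_if cp_zero c_pfst c_pe c_ctl c_ccons fl c_chd c_psnd c_proj) auto
  then show "computable n a \<Longrightarrow> computable n b \<Longrightarrow> computable n (\<lambda>xs. crevmap f (a xs) (b xs))"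
    unfolding crevmap_def by (intro c_psnd c_funpow_base c_pe)
qed

lemma c_id1: "computable 1 (\<lambda>v. id (v ! 0))" by (simp add: c_proj)

fun dcp :: "nat list \<Rightarrow> nat list \<Rightarrow> nat list \<times> nat list" where
  "dcp (x # xs) (y # ys) = (if x = y then dcp xs ys else (x # xs, y # ys))"
| "dcp xs ys = (xs, ys)"

definition dc_step :: "nat \<Rightarrow> nat" where
  "dc_step st = (if pfst st \<noteq> 0 \<and> psnd st \<noteq> 0 \<and> chd (pfst st) = chd (psnd st)
     then pe (ctl (pfst st)) (ctl (psnd st)) else st)"

lemma dc_stat: "xs = [] \<or> ys = [] \<Longrightarrow>
  (dc_step ^^ k) (pe (list_encode xs) (list_encode ys)) = pe (list_encode xs) (list_encode ys)"
  by (induction k) (auto simp: dc_step_def)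

lemma dcp_nil[simp]: "dcp xs [] = (xs, [])"
  by (cases xs) auto

lemma dc_step_iter:
  "length xs \<le> m \<Longrightarrow> (dc_step ^^ m) (pe (list_encode xs) (list_encode ys)) =
     pe (list_encode (fst (dcp xs ys))) (list_encode (snd (dcp xs ys)))"
proof (induction xs ys arbitrary: m rule: dcp.induct)
  case (1 x xs y ys)
  show ?case
  proof (cases "x = y")
    case True
    then obtain m' where m: "m = Suc m'" "length xs \<le> m'" using 1(2) by (cases m) auto
    have st: "dc_step (pe (list_encode (x # xs)) (list_encode (y # ys))) = pe (list_encode xs) (list_encode ys)"
      using True by (simp add: dc_step_def)
    show ?thesis unfolding m(1) funpow_Suc_right comp_def st using True 1(1)[OF True m(2)] by simp
  next
    case False
    have "(dc_step ^^ k) (pe (list_encode (x # xs)) (list_encode (y # ys))) =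
          pe (list_encode (x # xs)) (list_encode (y # ys))" for k
      by (induction k) (use False in \<open>auto simp: dc_step_def\<close>)
    then show ?thesis using False by simp
  qed
qed (auto simp: dc_stat[of "[]", simplified] dc_stat[of _ "[]", simplified])

definition cdcp :: "nat \<Rightarrow> nat \<Rightarrow> nat" where
  "cdcp a b = (dc_step ^^ a) (pe a b)"

lemma cdcp_enc: "cdcp (list_encode xs) (list_encode ys) =
   pe (list_encode (fst (dcp xs ys))) (list_encode (snd (dcp xs ys)))"
  unfolding cdcp_def by (rule dc_step_iter[OF length_le_enc])

lemma c_cdcp[intro]: "computable n a \<Longrightarrow> computable n b \<Longrightarrow> computable n (\<lambda>xs. cdcp (a xs) (b xs))"
proof -
  have "computable 1 (\<lambda>v. dc_step (v ! 0))" unfolding dc_step_def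
    by (intro c_if cp_and cp_not cp_zero cp_eq c_pfst c_psnd c_pe c_ctl c_chd c_proj) auto
  then show "computable n a \<Longrightarrow> computable n b \<Longrightarrow> computable n (\<lambda>xs. cdcp (a xs) (b xs))"
    unfolding cdcp_def by (intro c_funpow_base c_pe)
qed


definition enc :: "nat option \<Rightarrow> nat" where
  "enc r = (case r of None \<Rightarrow> 0 | Some y \<Rightarrow> Suc y)"

lemma enc_simps[simp]: "enc None = 0" "enc (Some y) = Suc y"
  by (auto simp: enc_def)

lemma enc_zero_iff[simp]: "enc r = 0 \<longleftrightarrow> r = None"
  by (cases r) auto

definition mstate :: "(nat \<Rightarrow> nat option) \<Rightarrow> nat \<Rightarrow> nat" where
  "mstate P t = rec_nat 1 (\<lambda>j s. if s = 1 then (if enc (P j) = 0 then 0 else if enc (P j) = 1 then Suc (Suc j) else 1) else s) t"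

definition msearch :: "(nat \<Rightarrow> nat option) \<Rightarrow> nat \<Rightarrow> nat option" where
  "msearch P t = (if 2 \<le> mstate P t then Some (mstate P t - 2) else None)"

primrec clk :: "recf \<Rightarrow> nat \<Rightarrow> nat list \<Rightarrow> nat option" where
  "clk Zf = (\<lambda>t xs. Some 0)"
| "clk Sf = (\<lambda>t xs. case xs of [] \<Rightarrow> None | x # _ \<Rightarrow> Some (Suc x))"
| "clk (Proj i) = (\<lambda>t xs. if i < length xs then Some (xs ! i) else None)"
| "clk (Comp f hs) = (\<lambda>t xs. (let rs = map (\<lambda>c. c t xs) (map clk hs) in
      if None \<in> set rs then None else clk f t (map the rs)))"
| "clk (Prec f h) = (\<lambda>t xs. case xs of [] \<Rightarrow> None | x # ys \<Rightarrow>
      rec_nat (clk f t ys) (\<lambda>i r. case r of None \<Rightarrow> None | Some y \<Rightarrow> clk h t (i # y # ys)) x)"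
| "clk (Mn f) = (\<lambda>t xs. msearch (\<lambda>m. clk f t (m # xs)) t)"


lemma mstate_Suc: "mstate P (Suc j) = (if mstate P j = 1 then (case P j of None \<Rightarrow> 0 | Some 0 \<Rightarrow> Suc (Suc j) | Some _ \<Rightarrow> 1) else mstate P j)"
  by (simp add: mstate_def enc_def split: option.split nat.split)

lemma ms1: "mstate P (Suc j) = 1 \<longleftrightarrow> mstate P j = 1 \<and> (\<exists>y. P j = Some (Suc y))"
  by (auto simp: mstate_Suc split: option.splits nat.splits)

lemma ms2: "mstate P (Suc j) = Suc (Suc n) \<longleftrightarrow> (mstate P j = 1 \<and> P j = Some 0 \<and> n = j) \<or> mstate P j = Suc (Suc n)"
  by (auto simp: mstate_Suc split: option.splits nat.splits)

lemma mstate_char1: "mstate P j = 1 \<longleftrightarrow> (\<forall>m<j. \<exists>y. P m = Some (Suc y))"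
proof (induction j)
  case 0 then show ?case by (simp add: mstate_def)
next
  case (Suc j) then show ?case unfolding ms1 by (auto simp: less_Suc_eq)
qed

lemma mstate_char2: "mstate P j = Suc (Suc n) \<longleftrightarrow> n < j \<and> P n = Some 0 \<and> (\<forall>m<n. \<exists>y. P m = Some (Suc y))"
proof (induction j)
  case 0 then show ?case by (simp add: mstate_def)
next
  case (Suc j)
  show ?case unfolding ms2 Suc mstate_char1
  proof
    assume "(\<forall>m<j. \<exists>y. P m = Some (Suc y)) \<and> P j = Some 0 \<and> n = j \<or>
        n < j \<and> P n = Some 0 \<and> (\<forall>m<n. \<exists>y. P m = Some (Suc y))"
    then show "n < Suc j \<and> P n = Some 0 \<and> (\<forall>m<n. \<exists>y. P m = Some (Suc y))" by auto
  next
    assume a: "n < Suc j \<and> P n = Some 0 \<and> (\<forall>m<n. \<exists>y. P m = Some (Suc y))"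
    show "(\<forall>m<j. \<exists>y. P m = Some (Suc y)) \<and> P j = Some 0 \<and> n = j \<or>
        n < j \<and> P n = Some 0 \<and> (\<forall>m<n. \<exists>y. P m = Some (Suc y))"
    proof (cases "n = j")
      case True then show ?thesis using a by auto
    next
      case False then show ?thesis using a by auto
    qed
  qed
qed

lemma msearch_char:
  "msearch P t = Some n \<longleftrightarrow> n < t \<and> P n = Some 0 \<and> (\<forall>m<n. \<exists>y. P m = Some (Suc y))"
proof -
  have "msearch P t = Some n \<longleftrightarrow> mstate P t = Suc (Suc n)"
    by (auto simp: msearch_def)
  then show ?thesis using mstate_char2[of P t] by blast
qed

lemma clk_Comp: "clk (Comp f hs) t xs = (if None \<in> set (map (\<lambda>h. clk h t xs) hs) then None
   else clk f t (map (\<lambda>h. the (clk h t xs)) hs))"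
  by (simp add: Let_def comp_def)

declare clk.simps(4)[simp del]

lemma clk_Comp_Some:
  "clk (Comp f hs) t xs = Some z \<longleftrightarrow> (\<exists>ys. list_all2 (\<lambda>h y. clk h t xs = Some y) hs ys \<and> clk f t ys = Some z)"
proof -
  have a: "(None \<notin> set (map (\<lambda>h. clk h t xs) hs)) \<longleftrightarrow> (\<exists>ys. list_all2 (\<lambda>h y. clk h t xs = Some y) hs ys)"
    by (induction hs) (auto simp: list_all2_Cons1)
  have b: "list_all2 (\<lambda>h y. clk h t xs = Some y) hs ys \<Longrightarrow> map (\<lambda>h. the (clk h t xs)) hs = ys" for ys
    by (induction hs arbitrary: ys) (auto simp: list_all2_Cons1)
  show ?thesis
  proof
    assume c: "clk (Comp f hs) t xs = Some z"
    then have n: "None \<notin> set (map (\<lambda>h. clk h t xs) hs)" by (auto simp: clk_Comp split: if_splits)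
    then obtain ys where ys: "list_all2 (\<lambda>h y. clk h t xs = Some y) hs ys" using a by blast
    then have "clk f t ys = Some z" using b[OF ys] c n by (simp add: clk_Comp)
    then show "\<exists>ys. list_all2 (\<lambda>h y. clk h t xs = Some y) hs ys \<and> clk f t ys = Some z" using ys by blast
  next
    assume "\<exists>ys. list_all2 (\<lambda>h y. clk h t xs = Some y) hs ys \<and> clk f t ys = Some z"
    then obtain ys where ys: "list_all2 (\<lambda>h y. clk h t xs = Some y) hs ys" "clk f t ys = Some z" by blast
    then have n: "None \<notin> set (map (\<lambda>h. clk h t xs) hs)" using a by blast
    show "clk (Comp f hs) t xs = Some z" using n b[OF ys(1)] ys(2) by (simp add: clk_Comp)
  qed
qed

lemma clk_Prec_Suc: "clk (Prec f h) t (Suc n # ys) = (case clk (Prec f h) t (n # ys) of None \<Rightarrow> None | Some y \<Rightarrow> clk h t (n # y # ys))"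
  by simp

lemma clk_Prec_0: "clk (Prec f h) t (0 # ys) = clk f t ys"
  by simp

lemma list_all2_mono_set:
  "list_all2 P xs ys \<Longrightarrow> (\<And>x y. x \<in> set xs \<Longrightarrow> P x y \<Longrightarrow> Q x y) \<Longrightarrow> list_all2 Q xs ys"
  by (induction rule: list_all2_induct) auto

lemma clk_mono: "clk e t xs = Some y \<Longrightarrow> t \<le> t' \<Longrightarrow> clk e t' xs = Some y"
proof (induction e arbitrary: xs y)
  case Zf then show ?case by simp
next
  case Sf then show ?case by simp
next
  case (Proj i) then show ?case by simp
next
  case (Comp f hs)
  then obtain ys where ys: "list_all2 (\<lambda>h y. clk h t xs = Some y) hs ys" "clk f t ys = Some y"
    by (auto simp: clk_Comp_Some)
  have "list_all2 (\<lambda>h y. clk h t' xs = Some y) hs ys"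
    using ys(1) Comp.IH(2) Comp.prems(2) by (auto elim!: list_all2_mono_set)
  then show ?case using ys(2) Comp.IH(1) Comp.prems(2) by (auto simp: clk_Comp_Some)
next
  case (Prec f h)
  then obtain x ys where xs: "xs = x # ys" by (cases xs) auto
  have "clk (Prec f h) t (x # ys) = Some y \<Longrightarrow> clk (Prec f h) t' (x # ys) = Some y" for y
  proof (induction x arbitrary: y)
    case 0 then show ?case using Prec.IH(1) Prec.prems(2) by (simp only: clk_Prec_0)
  next
    case (Suc x)
    then obtain y0 where "clk (Prec f h) t (x # ys) = Some y0" "clk h t (x # y0 # ys) = Some y"
      by (auto simp only: clk_Prec_Suc split: option.splits)
    then show ?case using Suc.IH Prec.IH(2) Prec.prems(2) by (simp only: clk_Prec_Suc) auto
  qed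
  then show ?case using Prec.prems xs by auto
next
  case (Mn f)
  then show ?case by (auto simp: msearch_char)
qed

lemma clk_sound: "clk e t xs = Some y \<Longrightarrow> ev e xs y"
proof (induction e arbitrary: xs y)
  case Zf then show ?case by (auto intro: ev.intros)
next
  case Sf then show ?case by (auto intro: ev.intros split: list.splits)
next
  case (Proj i) then show ?case by (auto intro: ev.intros split: if_splits)
next
  case (Comp f hs)
  then obtain ys where ys: "list_all2 (\<lambda>h y. clk h t xs = Some y) hs ys" "clk f t ys = Some y"
    by (auto simp: clk_Comp_Some)
  have "list_all2 (\<lambda>h y. ev h xs y) hs ys"
    using ys(1) Comp.IH(2) by (auto elim!: list_all2_mono_set)
  then show ?case using ys(2) Comp.IH(1) by (auto intro: ev.intros)
next
  case (Prec f h)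
  then obtain x ys where xs: "xs = x # ys" by (cases xs) auto
  have "clk (Prec f h) t (x # ys) = Some y \<Longrightarrow> ev (Prec f h) (x # ys) y" for y
  proof (induction x arbitrary: y)
    case 0 then show ?case using Prec.IH(1) by (auto intro: ev.intros simp only: clk_Prec_0)
  next
    case (Suc x)
    then obtain y0 where "clk (Prec f h) t (x # ys) = Some y0" "clk h t (x # y0 # ys) = Some y"
      by (auto simp only: clk_Prec_Suc split: option.splits)
    then show ?case using Suc.IH Prec.IH(2) by (auto intro: ev.intros)
  qed
  then show ?case using Prec.prems xs by auto
next
  case (Mn f)
  then have a: "clk f t (y # xs) = Some 0" "\<forall>m<y. \<exists>z. clk f t (m # xs) = Some (Suc z)"
    by (auto simp: msearch_char)
  show ?case
  proof (rule ev_Mn)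
    show "ev f (y # xs) 0" using a Mn.IH by auto
    show "\<forall>m<y. \<exists>z. ev f (m # xs) z \<and> z \<noteq> 0"
    proof (intro allI impI)
      fix m assume "m < y"
      then obtain z where "clk f t (m # xs) = Some (Suc z)" using a by auto
      then show "\<exists>z. ev f (m # xs) z \<and> z \<noteq> 0" using Mn.IH by blast
    qed
  qed
qed

lemma finite_max_time:
  fixes n :: nat and Q :: "nat \<Rightarrow> nat \<Rightarrow> bool"
  assumes "\<forall>m<n. \<exists>t. \<forall>t'\<ge>t. Q m t'"
  shows "\<exists>T. \<forall>m<n. \<forall>t'\<ge>T. Q m t'"
  using assms
proof (induction n)
  case 0 then show ?case by auto
next
  case (Suc n)
  then obtain T where T: "\<forall>m<n. \<forall>t'\<ge>T. Q m t'" by auto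
  obtain t where t: "\<forall>t'\<ge>t. Q n t'" using Suc.prems by auto
  show ?case by (rule exI[of _ "max T t"]) (use T t in \<open>auto simp: less_Suc_eq\<close>)
qed

lemma clk_complete: "ev e xs y \<Longrightarrow> \<exists>t. clk e t xs = Some y"
proof (induction rule: ev.induct)
  case (ev_Z xs) then show ?case by simp
next
  case (ev_S x xs) then show ?case by simp
next
  case (ev_Proj i xs) then show ?case by simp
next
  case (ev_Comp xs hs ys f z)
  have "\<exists>T. list_all2 (\<lambda>h y. \<forall>t'\<ge>T. clk h t' xs = Some y) hs ys"
    using ev_Comp(1)
  proof (induction rule: list_all2_induct)
    case Nil then show ?case by auto
  next
    case (Cons h hs y ys)
    then obtain T where T: "list_all2 (\<lambda>h y. \<forall>t'\<ge>T. clk h t' xs = Some y) hs ys" by auto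
    obtain t where t: "clk h t xs = Some y" using Cons.hyps by auto
    have 1: "\<forall>t'\<ge>max T t. clk h t' xs = Some y"
    proof (intro allI impI)
      fix t' assume "max T t \<le> t'" then show "clk h t' xs = Some y" by (intro clk_mono[OF t]) simp
    qed
    have 2: "list_all2 (\<lambda>h y. \<forall>t'\<ge>max T t. clk h t' xs = Some y) hs ys"
      using T by (rule list_all2_mono) simp
    have "list_all2 (\<lambda>h y. \<forall>t'\<ge>max T t. clk h t' xs = Some y) (h # hs) (y # ys)"
      using 1 2 by simp
    then show ?case by blast
  qed
  then obtain T where T: "list_all2 (\<lambda>h y. \<forall>t'\<ge>T. clk h t' xs = Some y) hs ys" by auto
  obtain t where t: "clk f t ys = Some z" using ev_Comp by blast
  have "list_all2 (\<lambda>h y. clk h (max T t) xs = Some y) hs ys" using T by (rule list_all2_mono) simp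
  moreover have "clk f (max T t) ys = Some z" by (intro clk_mono[OF t]) simp
  ultimately show ?case by (auto simp only: clk_Comp_Some)
next
  case (ev_Prec0 f xs y h)
  then show ?case by (auto simp only: clk_Prec_0)
next
  case (ev_PrecS f h n xs y z)
  obtain t1 where t1: "clk (Prec f h) t1 (n # xs) = Some y" using ev_PrecS.IH(1) by auto
  obtain t2 where t2: "clk h t2 (n # y # xs) = Some z" using ev_PrecS.IH(2) by auto
  have "clk (Prec f h) (max t1 t2) (n # xs) = Some y" "clk h (max t1 t2) (n # y # xs) = Some z"
    by (intro clk_mono[OF t1] clk_mono[OF t2], simp)+
  then have "clk (Prec f h) (max t1 t2) (Suc n # xs) = Some z" by (simp only: clk_Prec_Suc option.case)
  then show ?case by blast
next
  case (ev_Mn f n xs)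
  obtain t0 where t0: "clk f t0 (n # xs) = Some 0" using ev_Mn.IH(1) by auto
  have "\<forall>m<n. \<exists>t. \<forall>t'\<ge>t. \<exists>z. clk f t' (m # xs) = Some (Suc z)"
  proof (intro allI impI)
    fix m assume "m < n"
    then obtain z t where zt: "clk f t (m # xs) = Some z" "z \<noteq> 0" using ev_Mn.IH(2) by blast
    then obtain z' where z': "z = Suc z'" using not0_implies_Suc by blast
    show "\<exists>t. \<forall>t'\<ge>t. \<exists>z. clk f t' (m # xs) = Some (Suc z)"
    proof (intro exI allI impI)
      fix t' assume "t \<le> t'" then show "clk f t' (m # xs) = Some (Suc z')" using clk_mono zt(1) z' by blast
    qed
  qed
  from finite_max_time[OF this] obtain T where T: "\<forall>m<n. \<forall>t'\<ge>T. \<exists>z. clk f t' (m # xs) = Some (Suc z)" by blast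
  define t where "t = max (max T t0) (Suc n)"
  have tt: "T \<le> t" "t0 \<le> t" "n < t" unfolding t_def by auto
  have "clk f t (n # xs) = Some 0" using tt by (intro clk_mono[OF t0])
  moreover have "\<forall>m<n. \<exists>z. clk f t (m # xs) = Some (Suc z)" using T tt by blast
  ultimately have "clk (Mn f) t xs = Some n" unfolding clk.simps msearch_char using tt by blast
  then show ?case by blast
qed

lemma ev_iff_clk: "ev e xs y \<longleftrightarrow> (\<exists>t. clk e t xs = Some y)"
  using clk_sound clk_complete by blast


lemma enc_zero_iff2[simp]: "(0 = enc r) = (r = None)"
  by (cases r) auto

lemma c_app:
  assumes "computable m F" "length gs = m" "\<forall>g\<in>set gs. computable n g"
    "\<And>xs. length xs = n \<Longrightarrow> F (map (\<lambda>g. g xs) gs) = H xs"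
  shows "computable n H"
  using computable_cong[OF computable_compose[OF assms(1-3)]] assms(4) by metis

lemma map_shift: "length ws = k + n \<Longrightarrow> map (\<lambda>g. g ws) (map (\<lambda>j ws. ws ! (j + k)) [0..<n]) = drop k ws"
  by (rule nth_equalityI) (auto simp: add.commute)

lemma c_shift: "\<forall>g\<in>set (map (\<lambda>j ws. ws ! (j + k)) [0..<n]). computable (k + n) g"
  by (auto intro!: computable_proj)

lemma c_prodlist: "(\<forall>h\<in>set hs. computable n (G h)) \<Longrightarrow> computable n (\<lambda>zs. prod_list (map (\<lambda>h. G h zs) hs))"
proof (induction hs)
  case Nil then show ?case by (simp add: computable_const)
next
  case (Cons h hs)
  then have "computable n (\<lambda>zs. G h zs * prod_list (map (\<lambda>h. G h zs) hs))" by (intro c_mult) auto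
  then show ?case by simp
qed

lemma enc_comp_eq:
  "enc (clk (Comp f hs) t xs) = (if prod_list (map (\<lambda>h. enc (clk h t xs)) hs) = 0 then 0
     else enc (clk f t (map (\<lambda>h. enc (clk h t xs) - 1) hs)))"
proof -
  have a: "(None \<in> set (map (\<lambda>h. clk h t xs) hs)) = (prod_list (map (\<lambda>h. enc (clk h t xs)) hs) = 0)"
    by (auto simp: prod_list_zero_iff image_iff) (metis, metis)
  have b: "None \<notin> set (map (\<lambda>h. clk h t xs) hs) \<Longrightarrow>
     map (\<lambda>h. the (clk h t xs)) hs = map (\<lambda>h. enc (clk h t xs) - 1) hs"
    by (force simp: enc_def image_iff split: option.splits)
  show ?thesis
  proof (cases "None \<in> set (map (\<lambda>h. clk h t xs) hs)")
    case True then show ?thesis unfolding clk_Comp using a by simp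
  next
    case False then show ?thesis unfolding clk_Comp a[symmetric] b[OF False] by simp
  qed
qed

lemma enc_prec_eq:
  "enc (rec_nat (clk f t ys) (\<lambda>i r. case r of None \<Rightarrow> None | Some y \<Rightarrow> clk h t (i # y # ys)) x) =
   rec_nat (enc (clk f t ys)) (\<lambda>i r. if r = 0 then 0 else enc (clk h t (i # (r - 1) # ys))) x"
proof (induction x)
  case 0 then show ?case by simp
next
  case (Suc x)
  then show ?case by (simp add: Suc.IH[symmetric] split: option.split)
qed

lemma enc_msearch: "enc (msearch P t) = (if 2 \<le> mstate P t then mstate P t - 1 else 0)"
  by (auto simp: msearch_def)

lemma drop3: "drop 2 (tl xs) = drop 3 xs"
proof -
  have "drop 3 xs = drop (Suc 2) xs" by simp
  then show ?thesis by (simp only: drop_Suc)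
qed

lemma c_clk: "computable (Suc n) (\<lambda>zs. enc (clk e (hd zs) (tl zs)))"
proof (induction e arbitrary: n)
  case Zf
  show ?case by (rule computable_cong[OF computable_const[of _ 1]]) simp
next
  case Sf
  show ?case
  proof (cases n)
    case 0
    show ?thesis by (rule computable_cong[OF computable_const[of _ 0]]) (auto simp: 0 length_Suc_conv)
  next
    case (Suc n')
    have "computable (Suc n) (\<lambda>zs. Suc (Suc (zs ! 1)))" using Suc by (intro c_suc c_proj) auto
    then show ?thesis by (rule computable_cong) (auto simp: Suc length_Suc_conv)
  qed
next
  case (Proj i)
  show ?case
  proof (cases "i < n")
    case True
    have "computable (Suc n) (\<lambda>zs. Suc (zs ! Suc i))" using True by (intro c_suc c_proj) auto
    then show ?thesis by (rule computable_cong) (use True in \<open>auto simp: length_Suc_conv\<close>)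
  next
    case False
    show ?thesis by (rule computable_cong[OF computable_const[of _ 0]]) (use False in \<open>auto simp: length_Suc_conv\<close>)
  qed
next
  case (Comp f hs)
  let ?G = "\<lambda>h zs. enc (clk h (hd zs) (tl zs))"
  have G: "\<forall>h\<in>set hs. computable (Suc n) (?G h)" using Comp.IH(2) by blast
  have p: "computable (Suc n) (\<lambda>zs. prod_list (map (\<lambda>h. ?G h zs) hs))" by (rule c_prodlist[OF G])
  have q: "computable (Suc n) (\<lambda>zs. enc (clk f (hd zs) (map (\<lambda>h. ?G h zs - 1) hs)))"
  proof (rule c_app[OF Comp.IH(1)[of "length hs"]])
    show "length ((\<lambda>zs. zs ! 0) # map (\<lambda>h zs. ?G h zs - 1) hs) = Suc (length hs)" by simp
    show "\<forall>g\<in>set ((\<lambda>zs. zs ! 0) # map (\<lambda>h zs. ?G h zs - 1) hs). computable (Suc n) g"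
      using G by (auto intro!: computable_proj c_pred)
    show "enc (clk f (hd (map (\<lambda>g. g xs) ((\<lambda>zs. zs ! 0) # map (\<lambda>h zs. ?G h zs - 1) hs)))
        (tl (map (\<lambda>g. g xs) ((\<lambda>zs. zs ! 0) # map (\<lambda>h zs. ?G h zs - 1) hs)))) =
        enc (clk f (hd xs) (map (\<lambda>h. ?G h xs - 1) hs))" if "length xs = Suc n" for xs
      using that by (cases xs) (auto simp: comp_def)
  qed
  have "computable (Suc n) (\<lambda>zs. if prod_list (map (\<lambda>h. ?G h zs) hs) = 0 then 0
      else enc (clk f (hd zs) (map (\<lambda>h. ?G h zs - 1) hs)))"
    using p q by (intro c_if cp_zero computable_const)
  then show ?case by (rule computable_cong) (simp only: enc_comp_eq)
next
  case (Prec f h)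
  show ?case
  proof (cases n)
    case 0
    show ?thesis by (rule computable_cong[OF computable_const[of _ 0]]) (auto simp: 0 length_Suc_conv)
  next
    case (Suc n')
    have z: "computable (Suc (Suc n')) (\<lambda>zs. enc (clk f (zs ! 0) (drop 2 zs)))"
    proof (rule c_app[OF Prec.IH(1)[of n']])
      show "length ((\<lambda>zs. zs ! 0) # map (\<lambda>j ws. ws ! (j + 2)) [0..<n']) = Suc n'" by simp
      show "\<forall>g\<in>set ((\<lambda>zs. zs ! 0) # map (\<lambda>j ws. ws ! (j + 2)) [0..<n']). computable (Suc (Suc n')) g"
        by (auto intro!: computable_proj)
      show "enc (clk f (hd (map (\<lambda>g. g xs) ((\<lambda>zs. zs ! 0) # map (\<lambda>j ws. ws ! (j + 2)) [0..<n'])))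
          (tl (map (\<lambda>g. g xs) ((\<lambda>zs. zs ! 0) # map (\<lambda>j ws. ws ! (j + 2)) [0..<n'])))) =
          enc (clk f (xs ! 0) (drop 2 xs))" if "length xs = Suc (Suc n')" for xs
        using map_shift[of xs 2 n'] that by simp
    qed
    have hh: "computable (Suc (Suc (Suc (Suc n')))) (\<lambda>ws. enc (clk h (ws ! 2) (ws ! 0 # (ws ! 1 - 1) # drop 4 ws)))"
    proof (rule c_app[OF Prec.IH(2)[of "Suc (Suc n')"]])
      let ?gs = "[\<lambda>ws. ws ! 2, \<lambda>ws. ws ! 0, \<lambda>ws. ws ! 1 - 1] @ map (\<lambda>j ws. ws ! (j + 4)) [0..<n']"
      show "length ?gs = Suc (Suc (Suc n'))" by simp
      show "\<forall>g\<in>set ?gs. computable (Suc (Suc (Suc (Suc n')))) g"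
        by (auto intro!: computable_proj c_pred)
      show "enc (clk h (hd (map (\<lambda>g. g xs) ?gs)) (tl (map (\<lambda>g. g xs) ?gs))) =
          enc (clk h (xs ! 2) (xs ! 0 # (xs ! 1 - 1) # drop 4 xs))" if "length xs = Suc (Suc (Suc (Suc n')))" for xs
        using map_shift[of xs 4 n'] that by simp
    qed
    have "computable (Suc (Suc n')) (\<lambda>zs. rec_nat (enc (clk f (zs ! 0) (drop 2 zs)))
       (\<lambda>i r. if r = 0 then 0 else enc (clk h (zs ! 0) (i # (r - 1) # drop 2 zs))) (zs ! 1))"
    proof (rule c_rec2[OF z _ computable_proj])
      have "computable (Suc (Suc (Suc (Suc n')))) (\<lambda>ws. if ws ! 1 = 0 then 0 else enc (clk h (ws ! 2) (ws ! 0 # (ws ! 1 - 1) # drop 4 ws)))"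
        using hh by (intro c_if cp_zero computable_proj computable_const) auto
      then show "computable (Suc (Suc (Suc (Suc n')))) (\<lambda>ws. if ws ! 1 = 0 then 0 else
          enc (clk h (drop 2 ws ! 0) (ws ! 0 # (ws ! 1 - 1) # drop 2 (drop 2 ws))))"
        by (rule computable_cong) auto
    qed auto
    then show ?thesis unfolding Suc
    proof (rule computable_cong)
      fix zs :: "nat list" assume "length zs = Suc (Suc n')"
      then obtain t x ys where zs: "zs = t # x # ys" by (auto simp: length_Suc_conv)
      show "rec_nat (enc (clk f (zs ! 0) (drop 2 zs)))
          (\<lambda>i r. if r = 0 then 0 else enc (clk h (zs ! 0) (i # (r - 1) # drop 2 zs))) (zs ! 1) =
          enc (clk (Prec f h) (hd zs) (tl zs))"
      proof -
        have d: "drop 2 (t # x # ys) = ys" by (simp add: numeral_2_eq_2)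
        show ?thesis unfolding zs nth_Cons_0 d by (simp add: enc_prec_eq)
      qed
    qed
  qed
next
  case (Mn f)
  have F: "computable (Suc (Suc (Suc n))) (\<lambda>ws. enc (clk f (ws ! 2) (ws ! 0 # drop 3 ws)))"
  proof (rule c_app[OF Mn.IH[of "Suc n"]])
    let ?gs = "[\<lambda>ws. ws ! 2, \<lambda>ws. ws ! 0] @ map (\<lambda>j ws. ws ! (j + 3)) [0..<n]"
    show "length ?gs = Suc (Suc n)" by simp
    show "\<forall>g\<in>set ?gs. computable (Suc (Suc (Suc n))) g" by (auto intro!: computable_proj)
    show "enc (clk f (hd (map (\<lambda>g. g xs) ?gs)) (tl (map (\<lambda>g. g xs) ?gs))) =
          enc (clk f (xs ! 2) (xs ! 0 # drop 3 xs))" if "length xs = Suc (Suc (Suc n))" for xs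
      using map_shift[of xs 3 n] that by simp
  qed
  let ?E = "\<lambda>ws. enc (clk f (ws ! 2) (ws ! 0 # drop 3 ws))"
  have M: "computable (Suc n) (\<lambda>zs. rec_nat 1 (\<lambda>j s. if s = 1 then (if enc (clk f (zs ! 0) (j # tl zs)) = 0 then 0
      else if enc (clk f (zs ! 0) (j # tl zs)) = 1 then Suc (Suc j) else 1) else s) (zs ! 0))"
  proof (rule c_rec2[OF computable_const _ computable_proj])
    have "computable (Suc (Suc (Suc n))) (\<lambda>ws. if ws ! 1 = 1 then (if ?E ws = 0 then 0
      else if ?E ws = 1 then Suc (Suc (ws ! 0)) else 1) else ws ! 1)"
      using F by (intro c_if cp_eq cp_zero computable_proj computable_const c_suc) auto
    then show "computable (Suc (Suc (Suc n))) (\<lambda>ws. if ws ! 1 = 1 then (if enc (clk f (drop 2 ws ! 0) (ws ! 0 # tl (drop 2 ws))) = 0 then 0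
      else if enc (clk f (drop 2 ws ! 0) (ws ! 0 # tl (drop 2 ws))) = 1 then Suc (Suc (ws ! 0)) else 1) else ws ! 1)"
      by (rule computable_cong) (simp only: tl_drop drop3, simp add: nth_drop)
  qed auto
  have "computable (Suc n) (\<lambda>zs. if 2 \<le> mstate (\<lambda>m. clk f (hd zs) (m # tl zs)) (hd zs)
     then mstate (\<lambda>m. clk f (hd zs) (m # tl zs)) (hd zs) - 1 else 0)"
  proof -
    have e: "mstate (\<lambda>m. clk f (hd zs) (m # tl zs)) (hd zs) = rec_nat 1 (\<lambda>j s. if s = 1 then (if enc (clk f (zs ! 0) (j # tl zs)) = 0 then 0
      else if enc (clk f (zs ! 0) (j # tl zs)) = 1 then Suc (Suc j) else 1) else s) (zs ! 0)"
      if "length zs = Suc n" for zs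
      using that by (cases zs) (simp, simp only: nth_Cons_0 list.sel mstate_def)
    have "computable (Suc n) (\<lambda>zs. if 2 \<le> rec_nat 1 (\<lambda>j s. if s = 1 then (if enc (clk f (zs ! 0) (j # tl zs)) = 0 then 0
      else if enc (clk f (zs ! 0) (j # tl zs)) = 1 then Suc (Suc j) else 1) else s) (zs ! 0)
      then rec_nat 1 (\<lambda>j s. if s = 1 then (if enc (clk f (zs ! 0) (j # tl zs)) = 0 then 0
      else if enc (clk f (zs ! 0) (j # tl zs)) = 1 then Suc (Suc j) else 1) else s) (zs ! 0) - 1 else 0)"
      using M by (intro c_if cp_le c_pred computable_const)
    then show ?thesis by (rule computable_cong) (simp only: e)
  qed
  then show ?case by (rule computable_cong) (simp add: enc_msearch)
qed


definition flip :: "letter \<Rightarrow> letter" where "flip a = (fst a, \<not> snd a)"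
definition finv :: "letter list \<Rightarrow> letter list" where "finv w = rev (map flip w)"

lemma flip_flip[simp]: "flip (flip a) = a" by (simp add: flip_def)
lemma fst_flip[simp]: "fst (flip a) = fst a" by (simp add: flip_def)
lemma cancels_iff: "cancels a b \<longleftrightarrow> b = flip a"
  by (cases a; cases b) (auto simp: cancels_def flip_def)
lemma finv_finv[simp]: "finv (finv w) = w" by (simp add: finv_def rev_map[symmetric] comp_def)
lemma finv_append[simp]: "finv (u @ v) = finv v @ finv u" by (simp add: finv_def)
lemma finv_Cons: "finv (a # w) = finv w @ [flip a]" by (simp add: finv_def)
lemma finv_Nil[simp]: "finv [] = []" by (simp add: finv_def)
lemma length_finv[simp]: "length (finv w) = length w" by (simp add: finv_def)
lemma set_finv: "set (finv w) = flip ` set w" by (simp add: finv_def)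

lemma reduced_Cons: "reduced (a # w) \<longleftrightarrow> reduced w \<and> (w = [] \<or> \<not> cancels a (hd w))"
  by (cases w) auto

lemma reduced_append: "reduced (u @ v) \<longleftrightarrow> reduced u \<and> reduced v \<and> (u = [] \<or> v = [] \<or> \<not> cancels (last u) (hd v))"
proof (induction u)
  case Nil then show ?case by simp
next
  case (Cons a u)
  then show ?case by (cases u) (auto simp: reduced_Cons)
qed

lemma cancels_flip_sym: "cancels a b \<longleftrightarrow> cancels b a"
  by (auto simp: cancels_def)

lemma reduced_rev: "reduced w \<Longrightarrow> reduced (rev w)"
proof (induction w)
  case Nil then show ?case by simp
next
  case (Cons a w)
  then show ?case by (cases w) (auto simp: reduced_Cons reduced_append cancels_flip_sym)
qed

lemma reduced_map_flip: "reduced w \<Longrightarrow> reduced (map flip w)"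
proof (induction w)
  case Nil then show ?case by simp
next
  case (Cons a w)
  then show ?case by (cases w) (auto simp: reduced_Cons cancels_def flip_def)
qed

lemma reduced_finv: "reduced w \<Longrightarrow> reduced (finv w)"
  by (simp add: finv_def reduced_rev reduced_map_flip)

lemma reduced_push: "reduced w \<Longrightarrow> reduced (push a w)"
  by (cases w) (auto simp: reduced_Cons)

lemma push_flip_flip: "reduced w \<Longrightarrow> push a (push (flip a) w) = w"
proof (cases w)
  case Nil then show ?thesis by (simp add: cancels_iff)
next
  case (Cons b w')
  assume r: "reduced w"
  show ?thesis
  proof (cases "b = a")
    case True
    then have "push (flip a) w = w'" using Cons by (simp add: cancels_iff)
    moreover have "push a w' = a # w'" using r Cons True by (cases w') (auto simp: reduced_Cons)
    ultimately show ?thesis using Cons True by simp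
  next
    case False
    then have "push (flip a) w = flip a # w" using Cons by (auto simp: cancels_iff)
    then show ?thesis by (simp add: cancels_iff)
  qed
qed

lemma reduced_fmult: "reduced v \<Longrightarrow> reduced (fmult u v)"
  by (induction u) (auto simp: fmult_def reduced_push)

lemma fmult_Nil[simp]: "fmult [] v = v" by (simp add: fmult_def)
lemma fmult_Cons: "fmult (a # u) v = push a (fmult u v)" by (simp add: fmult_def)

lemma fmult_push: "reduced v \<Longrightarrow> reduced w \<Longrightarrow> fmult (push a v) w = push a (fmult v w)"
proof (cases v)
  case Nil then show ?thesis by (simp add: fmult_Cons)
next
  case (Cons b v')
  assume rv: "reduced v" and rw: "reduced w"
  show ?thesis
  proof (cases "cancels a b")
    case True
    then have b: "b = flip a" by (simp add: cancels_iff)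
    have "reduced (fmult v' w)" using rw by (rule reduced_fmult)
    then have "push a (push b (fmult v' w)) = fmult v' w" using b push_flip_flip by simp
    then show ?thesis using Cons True by (simp add: fmult_Cons)
  next
    case False then show ?thesis using Cons by (simp add: fmult_Cons)
  qed
qed

lemma fmult_assoc: "reduced v \<Longrightarrow> reduced w \<Longrightarrow> fmult (fmult u v) w = fmult u (fmult v w)"
proof (induction u)
  case Nil then show ?case by simp
next
  case (Cons a u)
  have "fmult (fmult (a # u) v) w = fmult (push a (fmult u v)) w" by (simp add: fmult_Cons)
  also have "\<dots> = push a (fmult (fmult u v) w)"
    by (rule fmult_push[OF reduced_fmult[OF Cons.prems(1)] Cons.prems(2)])
  also have "\<dots> = fmult (a # u) (fmult v w)" using Cons by (simp add: fmult_Cons)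
  finally show ?case .
qed

lemma fmult_reduced_append: "reduced (u @ v) \<Longrightarrow> fmult u v = u @ v"
proof (induction u)
  case Nil then show ?case by simp
next
  case (Cons a u)
  then have r: "reduced (u @ v)" by (simp add: reduced_Cons)
  then have "fmult u v = u @ v" using Cons.IH by simp
  then show ?case using Cons.prems by (cases "u @ v") (auto simp: fmult_Cons reduced_Cons)
qed

lemma fmult_right_Nil: "reduced u \<Longrightarrow> fmult u [] = u"
  using fmult_reduced_append[of u "[]"] by simp

lemma fmult_cancel: "fmult s (finv s @ y) = y"
proof (induction s arbitrary: y)
  case Nil then show ?case by simp
next
  case (Cons a s)
  have "fmult (a # s) (finv (a # s) @ y) = push a (fmult s (finv s @ (flip a # y)))"
    by (simp add: fmult_Cons finv_Cons)
  also have "\<dots> = push a (flip a # y)" using Cons.IH by simp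
  also have "\<dots> = y" by (simp add: cancels_iff)
  finally show ?case .
qed

lemma fmult_inv_left: "fmult (finv w) w = []"
  using fmult_cancel[of "finv w" "[]"] by simp

lemma fmult_inv_right: "fmult w (finv w) = []"
  using fmult_cancel[of w "[]"] by simp

lemma fmult_left_cancel: "reduced v \<Longrightarrow> reduced w \<Longrightarrow> fmult (finv w) (fmult w v) = v"
proof -
  assume rv: "reduced v" and rw: "reduced w"
  have "fmult (finv w) (fmult w v) = fmult (fmult (finv w) w) v"
    using fmult_assoc[OF rw rv] by simp
  then show ?thesis by (simp add: fmult_inv_left)
qed

lemma fmult_right_cancel: "reduced v \<Longrightarrow> reduced c \<Longrightarrow> fmult (fmult v c) (finv c) = v"
proof -
  assume rv: "reduced v" and rc: "reduced c"
  have "fmult (fmult v c) (finv c) = fmult v (fmult c (finv c))"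
    by (rule fmult_assoc[OF rc reduced_finv[OF rc]])
  then show ?thesis by (simp add: fmult_inv_right fmult_right_Nil[OF rv])
qed

lemma length_push: "length (push a w) \<le> Suc (length w)"
  by (cases w) auto

lemma length_fmult: "length (fmult u v) \<le> length u + length v"
proof (induction u)
  case Nil then show ?case by simp
next
  case (Cons a u)
  then show ?case using length_push[of a "fmult u v"] by (simp add: fmult_Cons)
qed

lemma set_push: "set (push a w) \<subseteq> insert a (set w)"
  by (cases w) auto

lemma set_fmult: "set (fmult u v) \<subseteq> set u \<union> set v"
proof (induction u)
  case Nil then show ?case by simp
next
  case (Cons a u)
  then show ?case using set_push[of a "fmult u v"] by (auto simp: fmult_Cons)
qed

lemma FX_fmult: "u \<in> FX k \<Longrightarrow> v \<in> FX k \<Longrightarrow> fmult u v \<in> FX k"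
  using set_fmult[of u v] reduced_fmult[of v u] unfolding FX_def by auto

lemma FX_finv: "u \<in> FX k \<Longrightarrow> finv u \<in> FX k"
  unfolding FX_def by (auto simp: set_finv reduced_finv)

lemma FX_Nil[simp]: "[] \<in> FX k" by (simp add: FX_def)

lemma fmult_inj: "\<omega> \<in> FX k \<Longrightarrow> inj_on (fmult \<omega>) (FX k)"
  by (rule inj_on_inverseI[where g = "fmult (finv \<omega>)"]) (auto simp: FX_def fmult_left_cancel)

definition lett :: "('a, 'b) monoid_scheme \<Rightarrow> (nat \<Rightarrow> 'a) \<Rightarrow> letter \<Rightarrow> 'a" where
  "lett G g a = (if snd a then g (fst a) else inv\<^bsub>G\<^esub> (g (fst a)))"

lemma piG_Nil[simp]: "piG G g [] = \<one>\<^bsub>G\<^esub>" by (simp add: piG_def)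
lemma piG_Cons: "piG G g (a # w) = lett G g a \<otimes>\<^bsub>G\<^esub> piG G g w" by (simp add: piG_def lett_def)

context
  fixes G (structure) and g :: "nat \<Rightarrow> 'a" and k :: nat
  assumes grp: "group G" and gk: "g ` {..<k} \<subseteq> carrier G"
begin

interpretation group G by (rule grp)

lemma lett_carrier: "fst a < k \<Longrightarrow> lett G g a \<in> carrier G"
  using gk by (auto simp: lett_def)

lemma piG_carrier: "\<forall>a\<in>set w. fst a < k \<Longrightarrow> piG G g w \<in> carrier G"
  by (induction w) (auto simp: piG_Cons lett_carrier)

lemma lett_flip: "fst a < k \<Longrightarrow> lett G g (flip a) = inv (lett G g a)"
  using gk by (auto simp: lett_def flip_def)

lemma piG_append: "\<forall>a\<in>set u. fst a < k \<Longrightarrow> \<forall>a\<in>set v. fst a < k \<Longrightarrow> piG G g (u @ v) = piG G g u \<otimes> piG G g v"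
  by (induction u) (auto simp: piG_Cons lett_carrier piG_carrier m_assoc)

lemma piG_push: "fst a < k \<Longrightarrow> \<forall>b\<in>set w. fst b < k \<Longrightarrow> piG G g (push a w) = lett G g a \<otimes> piG G g w"
proof (cases w)
  case Nil then show ?thesis by (simp add: piG_Cons)
next
  case (Cons b w')
  assume a: "fst a < k" and w: "\<forall>b\<in>set w. fst b < k"
  show ?thesis
  proof (cases "cancels a b")
    case True
    then have b: "b = flip a" by (simp add: cancels_iff)
    have "lett G g a \<otimes> piG G g w = lett G g a \<otimes> (inv (lett G g a) \<otimes> piG G g w')"
      using Cons b a by (simp add: piG_Cons lett_flip)
    also have "\<dots> = piG G g w'"
      using a w Cons by (simp add: lett_carrier piG_carrier m_assoc[symmetric])
    finally show ?thesis using Cons True by simp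
  next
    case False then show ?thesis using Cons by (simp add: piG_Cons)
  qed
qed

lemma piG_fmult: "\<forall>a\<in>set u. fst a < k \<Longrightarrow> \<forall>a\<in>set v. fst a < k \<Longrightarrow> piG G g (fmult u v) = piG G g u \<otimes> piG G g v"
proof (induction u)
  case Nil then show ?case by (simp add: piG_carrier)
next
  case (Cons a u)
  have s: "\<forall>b\<in>set (fmult u v). fst b < k" using set_fmult[of u v] Cons.prems by auto
  have "piG G g (fmult (a # u) v) = lett G g a \<otimes> piG G g (fmult u v)"
    using Cons.prems s by (simp add: fmult_Cons piG_push)
  also have "\<dots> = lett G g a \<otimes> (piG G g u \<otimes> piG G g v)" using Cons by simp
  also have "\<dots> = piG G g (a # u) \<otimes> piG G g v"
    using Cons.prems by (simp add: piG_Cons m_assoc lett_carrier piG_carrier)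
  finally show ?case .
qed

lemma piG_FX_fmult: "u \<in> FX k \<Longrightarrow> v \<in> FX k \<Longrightarrow> piG G g (fmult u v) = piG G g u \<otimes> piG G g v"
  by (rule piG_fmult) (auto simp: FX_def)

lemma piG_FX_carrier: "u \<in> FX k \<Longrightarrow> piG G g u \<in> carrier G"
  by (rule piG_carrier) (auto simp: FX_def)

lemma piG_surj: "x \<in> generate G (g ` {..<k}) \<Longrightarrow> \<exists>w\<in>FX k. piG G g w = x"
proof (induction rule: generate.induct)
  case one then show ?case by (intro bexI[of _ "[]"]) auto
next
  case (incl h)
  then obtain i where i: "i < k" "h = g i" by auto
  show ?case by (intro bexI[of _ "[(i, True)]"]) (use i gk in \<open>auto simp: FX_def piG_Cons lett_def\<close>)
next
  case (inv h)
  then obtain i where i: "i < k" "h = g i" by auto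
  show ?case by (intro bexI[of _ "[(i, False)]"]) (use i gk in \<open>auto simp: FX_def piG_Cons lett_def\<close>)
next
  case (eng h1 h2)
  then obtain w1 w2 where w: "w1 \<in> FX k" "piG G g w1 = h1" "w2 \<in> FX k" "piG G g w2 = h2" by auto
  show ?case by (intro bexI[of _ "fmult w1 w2"]) (use w in \<open>auto simp: piG_FX_fmult FX_fmult\<close>)
qed

end


lemma finite_ballF: "finite (ballF k n)"
proof -
  have "ballF k n \<subseteq> {xs. set xs \<subseteq> {..<k} \<times> UNIV \<and> length xs \<le> n}"
    by (auto simp: ballF_def FX_def)
  moreover have "finite {xs. set xs \<subseteq> ({..<k} \<times> (UNIV :: bool set)) \<and> length xs \<le> n}"
    using finite_lists_length_le[of "{..<k} \<times> (UNIV :: bool set)" n] by simp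
  ultimately show ?thesis by (rule finite_subset)
qed

lemma Nil_ballF[simp]: "[] \<in> ballF k n" by (simp add: ballF_def)

lemma card_ballF_pos: "0 < card (ballF k n)"
proof -
  have "ballF k n \<noteq> {}" using Nil_ballF[of k n] by blast
  then show ?thesis using finite_ballF[of k n] by (simp add: card_gt_0_iff)
qed

lemma card_ballF_Suc: "card (ballF k (Suc n)) \<le> (2 * k + 1) * card (ballF k n)"
proof -
  let ?A = "{..<k} \<times> (UNIV :: bool set)"
  have sub: "ballF k (Suc n) \<subseteq> ballF k n \<union> (\<lambda>(a, w). a # w) ` (?A \<times> ballF k n)"
  proof
    fix w assume w: "w \<in> ballF k (Suc n)"
    show "w \<in> ballF k n \<union> (\<lambda>(a, w). a # w) ` (?A \<times> ballF k n)"
    proof (cases "length w \<le> n")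
      case True then show ?thesis using w by (auto simp: ballF_def)
    next
      case False
      then obtain a w' where aw: "w = a # w'" by (cases w) auto
      have wf: "\<forall>b\<in>set w. fst b < k" "reduced w" "length w \<le> Suc n" using w by (auto simp: ballF_def FX_def)
      have "a \<in> ?A" using wf(1) aw by (cases a) auto
      moreover have "w' \<in> ballF k n" using wf aw False unfolding ballF_def FX_def by (auto simp: reduced_Cons)
      ultimately have "a \<in> ?A" "w' \<in> ballF k n" by auto
      then show ?thesis using aw by (auto intro!: image_eqI[of _ _ "(a, w')"])
    qed
  qed
  have fA: "finite ?A" by auto
  have cA: "card ?A = 2 * k" by (simp add: card_cartesian_product)
  have "card (ballF k (Suc n)) \<le> card (ballF k n \<union> (\<lambda>(a, w). a # w) ` (?A \<times> ballF k n))"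
    by (rule card_mono[OF _ sub]) (intro finite_UnI finite_imageI finite_cartesian_product finite_ballF fA)
  also have "\<dots> \<le> card (ballF k n) + card ((\<lambda>(a, w). a # w) ` (?A \<times> ballF k n))"
    by (rule card_Un_le)
  also have "\<dots> \<le> card (ballF k n) + card (?A \<times> ballF k n)"
  proof -
    have "card ((\<lambda>(a, w). a # w) ` (?A \<times> ballF k n)) \<le> card (?A \<times> ballF k n)"
      by (rule card_image_le) (intro finite_cartesian_product fA finite_ballF)
    then show ?thesis by simp
  qed
  also have "\<dots> = (2 * k + 1) * card (ballF k n)" using cA by (simp add: card_cartesian_product)
  finally show ?thesis .
qed

lemma card_ballF_add: "card (ballF k (n + d)) \<le> (2 * k + 1) ^ d * card (ballF k n)"
proof (induction d)
  case 0 then show ?case by simp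
next
  case (Suc d)
  have "card (ballF k (n + Suc d)) \<le> (2 * k + 1) * card (ballF k (n + d))"
    using card_ballF_Suc[of k "n + d"] by simp
  also have "\<dots> \<le> (2 * k + 1) * ((2 * k + 1) ^ d * card (ballF k n))"
    by (rule mult_le_mono2[OF Suc.IH])
  also have "\<dots> = (2 * k + 1) ^ Suc d * card (ballF k n)" by (simp add: algebra_simps)
  finally show ?case .
qed


lemma helper_eq: "(a::real) \<noteq> 0 \<Longrightarrow> K \<noteq> 0 \<Longrightarrow> a * (1 / (2 * a * K) * (K * c)) = c / 2"
  by (simp add: field_simps)

lemma length_le_sum: "finite A \<Longrightarrow> x \<in> A \<Longrightarrow> (f x :: nat) \<le> sum f A"
  by (rule member_le_sum) auto

context
  fixes G (structure) and g :: "nat \<Rightarrow> 'a" and k :: nat and S :: "letter list set" and f :: recf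
  assumes grp: "group G" and gk: "g ` {..<k} \<subseteq> carrier G"
    and gen: "generate G (g ` {..<k}) = carrier G"
    and inf: "infinite (carrier G)"
    and SFX: "S \<subseteq> FX k"
    and halt: "\<forall>w\<in>S. \<exists>y. ev f [code w] y"
    and corr: "\<forall>w\<in>FX k. \<forall>y. ev f [code w] y \<longrightarrow> (y = 0 \<longleftrightarrow> piG G g w = \<one>)"
    and dens: "\<forall>\<delta>>0. \<forall>N. \<exists>n\<ge>N. \<exists>\<omega>\<in>FX k. real (card (S \<inter> fmult \<omega> ` ballF k n)) > (1 - \<delta>) * real (card (ballF k n))"
begin

interpretation group G by (rule grp)

lemma piG_finv: "l \<in> FX k \<Longrightarrow> piG G g (finv l) = inv (piG G g l)"
proof -
  assume l: "l \<in> FX k"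
  have "piG G g (finv l) \<otimes> piG G g l = \<one>"
    using piG_FX_fmult[OF grp gk FX_finv[OF l] l] by (simp add: fmult_inv_left)
  then show ?thesis
    by (intro inv_equality[symmetric]) (auto intro: piG_FX_carrier[OF grp gk] l FX_finv)
qed

lemma exists_UU: "\<exists>UU. UU \<subseteq> FX k \<and> finite UU \<and> card UU = M \<and> inj_on (piG G g) UU"
proof -
  obtain X where X: "finite X" "card X = M" "X \<subseteq> carrier G"
    using infinite_arbitrarily_large[OF inf] by blast
  define sel where "sel x = (SOME w. w \<in> FX k \<and> piG G g w = x)" for x
  have sel: "sel x \<in> FX k \<and> piG G g (sel x) = x" if "x \<in> X" for x
  proof -
    have "\<exists>w\<in>FX k. piG G g w = x" using piG_surj[OF grp gk] gen X(3) that by auto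
    then show ?thesis unfolding sel_def by (rule someI2_bex) auto
  qed
  have inj: "inj_on sel X" by (rule inj_on_inverseI[where g = "piG G g"]) (use sel in auto)
  show ?thesis
  proof (intro exI conjI)
    show "sel ` X \<subseteq> FX k" using sel by auto
    show "finite (sel ` X)" using X by auto
    show "card (sel ` X) = M" using card_image[OF inj] X by simp
    show "inj_on (piG G g) (sel ` X)" by (rule inj_on_inverseI[where g = sel]) (use sel in auto)
  qed
qed

lemma good_exists:
  assumes L: "set L \<subseteq> FX k"
  shows "\<exists>w\<in>FX k. \<forall>l\<in>set L. \<exists>y. ev f [code (fmult w (finv l))] y \<and> y \<noteq> 0"
proof (cases "L = []")
  case True then show ?thesis by (intro bexI[of _ "[]"]) auto
next
  case False
  define m where "m = length L"
  have m1: "1 \<le> m" using False by (simp add: m_def Suc_le_eq)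
  obtain UU where UU: "UU \<subseteq> FX k" "finite UU" "card UU = Suc m" "inj_on (piG G g) UU"
    using exists_UU by blast
  define d where "d = (\<Sum>u\<in>UU. length u) + (\<Sum>l\<in>set L. length l)"
  have dle: "length u + length l \<le> d" if "u \<in> UU" "l \<in> set L" for u l
    using length_le_sum[OF UU(2) that(1), of length] length_le_sum[OF _ that(2), of length]
    unfolding d_def by simp
  define K where "K = real ((2 * k + 1) ^ d)"
  have K: "K \<ge> 1" unfolding K_def by simp
  define \<delta> where "\<delta> = 1 / (2 * real (Suc m * m) * K)"
  have \<delta>pos: "\<delta> > 0" using m1 K unfolding \<delta>_def by (simp del: of_nat_mult)
  obtain n \<omega> where n: "n \<ge> d" and \<omega>: "\<omega> \<in> FX k"
    and dn: "real (card (S \<inter> fmult \<omega> ` ballF k n)) > (1 - \<delta>) * real (card (ballF k n))"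
    using dens \<delta>pos by blast
  define B where "B = ballF k (n - d)"
  define \<Omega> where "\<Omega> = fmult \<omega> ` ballF k n"
  define T where "T = \<Omega> - S"
  have finB: "finite B" unfolding B_def by (rule finite_ballF)
  have fin\<Omega>: "finite \<Omega>" unfolding \<Omega>_def using finite_ballF by blast
  have finT: "finite T" unfolding T_def using fin\<Omega> by blast
  have cardB: "card (ballF k n) \<le> (2 * k + 1) ^ d * card B"
    using card_ballF_add[of k "n - d" d] n unfolding B_def by simp
  have card\<Omega>: "card \<Omega> = card (ballF k n)"
    unfolding \<Omega>_def by (rule card_image) (rule inj_on_subset[OF fmult_inj[OF \<omega>]], auto simp: ballF_def)
  have cardT: "card T = card \<Omega> - card (S \<inter> \<Omega>)"
    unfolding T_def using card_Diff_subset_Int[of \<Omega> S] fin\<Omega> by (simp add: Int_commute)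
  have le: "card (S \<inter> \<Omega>) \<le> card \<Omega>" using fin\<Omega> by (intro card_mono) auto
  have Tlt: "real (card T) < \<delta> * real (card (ballF k n))"
  proof -
    have "real (card T) = real (card (ballF k n)) - real (card (S \<inter> \<Omega>))"
      using cardT card\<Omega> le by (simp add: of_nat_diff)
    then show ?thesis using dn unfolding \<Omega>_def by (simp add: algebra_simps)
  qed
  define z where "z v u l = fmult \<omega> (fmult v (fmult u (finv l)))" for v u l
  define Bad where "Bad p = {v \<in> B. z v (fst p) (snd p) \<in> T}" for p
  have zin: "z v u l \<in> \<Omega>" if "v \<in> B" "u \<in> UU" "l \<in> set L" for v u l
  proof -
    have c: "fmult u (finv l) \<in> FX k" using that UU(1) L by (intro FX_fmult FX_finv) auto
    have lc: "length (fmult u (finv l)) \<le> d"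
      using length_fmult[of u "finv l"] dle[OF that(2,3)] by simp
    have "fmult v (fmult u (finv l)) \<in> ballF k n"
      using that(1) c lc length_fmult[of v "fmult u (finv l)"] n FX_fmult[OF _ c, of v]
      unfolding B_def ballF_def by auto
    then show ?thesis unfolding z_def \<Omega>_def by blast
  qed
  have cardBad: "card (Bad p) \<le> card T" if p: "p \<in> UU \<times> set L" for p
  proof (rule card_inj_on_le[OF _ _ finT])
    obtain u l where ul: "p = (u, l)" "u \<in> UU" "l \<in> set L" using p by auto
    have c: "fmult u (finv l) \<in> FX k" using ul UU(1) L by (intro FX_fmult FX_finv) auto
    show "inj_on (\<lambda>v. z v (fst p) (snd p)) (Bad p)"
    proof (rule inj_onI)
      fix v v' assume v: "v \<in> Bad p" "v' \<in> Bad p" and eq: "z v (fst p) (snd p) = z v' (fst p) (snd p)"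
      have vF: "v \<in> FX k" "v' \<in> FX k" using v unfolding Bad_def B_def ballF_def by auto
      have "fmult v (fmult u (finv l)) = fmult v' (fmult u (finv l))"
        using eq fmult_inj[OF \<omega>] FX_fmult[OF vF(1) c] FX_fmult[OF vF(2) c] unfolding z_def ul(1)
        by (auto dest: inj_onD)
      then have "fmult (fmult v (fmult u (finv l))) (finv (fmult u (finv l))) =
                 fmult (fmult v' (fmult u (finv l))) (finv (fmult u (finv l)))" by simp
      then show "v = v'" using vF c by (simp add: fmult_right_cancel FX_def)
    qed
    show "(\<lambda>v. z v (fst p) (snd p)) ` Bad p \<subseteq> T" unfolding Bad_def by auto
  qed
  define BadAll where "BadAll = (\<Union>p\<in>UU \<times> set L. Bad p)"
  have finP: "finite (UU \<times> set L)" using UU(2) by auto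
  have cardP: "card (UU \<times> set L) \<le> Suc m * m"
  proof -
    have "card (UU \<times> set L) = Suc m * card (set L)" using UU(3) by (simp add: card_cartesian_product)
    also have "\<dots> \<le> Suc m * m" unfolding m_def by (intro mult_le_mono2 card_length)
    finally show ?thesis .
  qed
  have "card BadAll \<le> (\<Sum>p\<in>UU \<times> set L. card (Bad p))"
    unfolding BadAll_def by (rule card_UN_le[OF finP])
  also have "\<dots> \<le> (\<Sum>p\<in>UU \<times> set L. card T)" by (rule sum_mono) (rule cardBad)
  also have "\<dots> = card (UU \<times> set L) * card T" by simp
  also have "\<dots> \<le> Suc m * m * card T" using cardP by (rule mult_le_mono1)
  finally have cBA: "real (card BadAll) \<le> real (Suc m * m) * real (card T)"
    by (metis of_nat_le_iff of_nat_mult)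
  have pos: "real (Suc m * m) > 0" using m1 by (intro of_nat_0_less_iff[THEN iffD2]) simp
  have "real (Suc m * m) * real (card T) < real (Suc m * m) * (\<delta> * real (card (ballF k n)))"
    using Tlt pos by (rule mult_strict_left_mono)
  also have "\<dots> \<le> real (Suc m * m) * (\<delta> * (K * real (card B)))"
  proof -
    have "real (card (ballF k n)) \<le> K * real (card B)"
      unfolding K_def using cardB by (metis of_nat_le_iff of_nat_mult)
    then show ?thesis using \<delta>pos pos by (intro mult_left_mono) auto
  qed
  also have "\<dots> = real (card B) / 2"
    unfolding \<delta>_def by (rule helper_eq) (use pos K in auto)
  also have "\<dots> \<le> real (card B)" by simp
  finally have "card BadAll < card B" using cBA by linarith
  moreover have "BadAll \<subseteq> B" unfolding BadAll_def Bad_def by auto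
  ultimately have "\<not> B \<subseteq> BadAll" using finB card_mono[of B B] by (metis card_mono finite_subset not_le)
  then obtain v where v: "v \<in> B" "v \<notin> BadAll" by blast
  have vF: "v \<in> FX k" using v unfolding B_def ballF_def by auto
  have zS: "z v u l \<in> S" if "u \<in> UU" "l \<in> set L" for u l
    using v zin[OF v(1) that] that unfolding BadAll_def Bad_def T_def by auto
  define wu where "wu u = fmult (fmult \<omega> v) u" for u
  have wuF: "wu u \<in> FX k" if "u \<in> UU" for u using that UU(1) \<omega> vF unfolding wu_def by (intro FX_fmult) auto
  have wz: "fmult (wu u) (finv l) = z v u l" if "u \<in> UU" "l \<in> set L" for u l
  proof -
    have r: "reduced u" "reduced (finv l)" "reduced v" "reduced (fmult u (finv l))"
      using that UU(1) L vF FX_finv[of l k] FX_fmult[OF _ FX_finv, of u k l] by (auto simp: FX_def)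
    have "fmult (fmult (fmult \<omega> v) u) (finv l) = fmult (fmult \<omega> v) (fmult u (finv l))"
      by (rule fmult_assoc[OF r(1,2)])
    also have "\<dots> = fmult \<omega> (fmult v (fmult u (finv l)))" by (rule fmult_assoc[OF r(3,4)])
    finally show ?thesis unfolding wu_def z_def .
  qed
  show ?thesis
  proof (rule ccontr)
    assume no: "\<not> ?thesis"
    have bad: "\<exists>l\<in>set L. piG G g (wu u) = piG G g l" if u: "u \<in> UU" for u
    proof -
      obtain l where l: "l \<in> set L" "\<not> (\<exists>y. ev f [code (fmult (wu u) (finv l))] y \<and> y \<noteq> 0)"
        using no wuF[OF u] by blast
      have zs: "fmult (wu u) (finv l) \<in> S" using zS[OF u l(1)] wz[OF u l(1)] by simp
      obtain y where y: "ev f [code (fmult (wu u) (finv l))] y" using halt zs by blast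
      then have "y = 0" using l(2) by blast
      then have one: "piG G g (fmult (wu u) (finv l)) = \<one>" using corr zs SFX y by blast
      have lF: "l \<in> FX k" using l L by auto
      have "piG G g (wu u) \<otimes> inv (piG G g l) = \<one>"
        using one piG_FX_fmult[OF grp gk wuF[OF u] FX_finv[OF lF]] piG_finv[OF lF] by simp
      then have "piG G g (wu u) = piG G g l"
        using piG_FX_carrier[OF grp gk wuF[OF u]] piG_FX_carrier[OF grp gk lF]
        by (metis inv_closed inv_inv inv_equality)
      then show ?thesis using l by blast
    qed
    have phi: "piG G g (wu u) = piG G g (fmult \<omega> v) \<otimes> piG G g u" if "u \<in> UU" for u
      unfolding wu_def using that UU(1) \<omega> vF by (intro piG_FX_fmult[OF grp gk] FX_fmult) auto
    have inj: "inj_on (\<lambda>u. piG G g (wu u)) UU"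
    proof (rule inj_onI)
      fix u u' assume u: "u \<in> UU" "u' \<in> UU" and eq: "piG G g (wu u) = piG G g (wu u')"
      have c: "piG G g (fmult \<omega> v) \<in> carrier G" "piG G g u \<in> carrier G" "piG G g u' \<in> carrier G"
        using u UU(1) \<omega> vF by (auto intro!: piG_FX_carrier[OF grp gk] FX_fmult)
      have "piG G g u = piG G g u'" using eq phi[OF u(1)] phi[OF u(2)] c by simp
      then show "u = u'" using UU(4) u by (auto dest: inj_onD)
    qed
    have sub: "(\<lambda>u. piG G g (wu u)) ` UU \<subseteq> piG G g ` set L" using bad by auto
    have "Suc m = card ((\<lambda>u. piG G g (wu u)) ` UU)" using card_image[OF inj] UU(3) by simp
    also have "\<dots> \<le> card (piG G g ` set L)" by (rule card_mono[OF _ sub]) auto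
    also have "\<dots> \<le> card (set L)" by (rule card_image_le) auto
    also have "\<dots> \<le> m" unfolding m_def by (rule card_length)
    finally show False by simp
  qed
qed

end


lemma flip_eq_iff[simp]: "flip a = flip b \<longleftrightarrow> a = b" by (metis flip_flip)

definition lc :: "letter \<Rightarrow> nat" where "lc a = 2 * fst a + (if snd a then 1 else 0)"
definition of_lc :: "nat \<Rightarrow> letter" where "of_lc d = (d div 2, d mod 2 = 1)"
definition ninv :: "nat \<Rightarrow> nat" where "ninv d = (if d mod 2 = 0 then d + 1 else d - 1)"
definition word :: "nat \<Rightarrow> letter list" where "word c = map of_lc (list_decode c)"

lemma lc_of_lc[simp]: "lc (of_lc d) = d" unfolding lc_def of_lc_def by simp presburger
lemma of_lc_lc[simp]: "of_lc (lc a) = a" by (cases a) (auto simp: lc_def of_lc_def)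
lemma lc_inj: "inj lc" by (metis injI of_lc_lc)
lemma lc_eq_iff[simp]: "lc a = lc b \<longleftrightarrow> a = b" by (metis of_lc_lc)
lemma code_lc: "code w = list_encode (map lc w)" unfolding code_def by (simp add: lc_def[abs_def])
lemma map_lc_of_lc: "map lc (map of_lc ds) = ds" by (induction ds) auto
lemma code_word[simp]: "code (word c) = c" unfolding code_lc word_def map_lc_of_lc by simp
lemma word_code[simp]: "word (code w) = w" by (simp add: code_lc word_def comp_def)
lemma ninv_lc: "ninv (lc a) = lc (flip a)" by (cases a) (auto simp: ninv_def lc_def flip_def)
lemma fst_of_lc: "fst (of_lc d) < k \<longleftrightarrow> d < 2 * k" by (auto simp: of_lc_def)

fun vlist :: "nat \<Rightarrow> nat list \<Rightarrow> bool" where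
  "vlist k [] = True"
| "vlist k (d # ds) = (d < 2 * k \<and> (ds = [] \<or> hd ds \<noteq> ninv d) \<and> vlist k ds)"

lemma cancels_of_lc: "cancels (of_lc d) (of_lc d') \<longleftrightarrow> d' = ninv d"
proof -
  have "cancels (of_lc d) (of_lc d') \<longleftrightarrow> of_lc d' = flip (of_lc d)" by (simp add: cancels_iff)
  also have "\<dots> \<longleftrightarrow> lc (of_lc d') = lc (flip (of_lc d))" by (rule lc_eq_iff[symmetric])
  also have "\<dots> \<longleftrightarrow> d' = ninv d" by (simp add: ninv_lc[symmetric])
  finally show ?thesis .
qed

lemma vlist_FX: "vlist k ds \<longleftrightarrow> map of_lc ds \<in> FX k"
proof (induction ds)
  case Nil then show ?case by (simp add: FX_def)
next
  case (Cons d ds)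
  show ?case
  proof (cases ds)
    case Nil then show ?thesis by (auto simp: FX_def fst_of_lc)
  next
    case (Cons d' ds')
    then show ?thesis using Cons.IH by (auto simp: FX_def fst_of_lc cancels_of_lc)
  qed
qed

lemma valid_word: "vlist k (list_decode c) \<longleftrightarrow> word c \<in> FX k"
  by (simp add: vlist_FX word_def)

lemma dcp_prop: "dcp xs ys = (P, Q) \<Longrightarrow> \<exists>s. xs = s @ P \<and> ys = s @ Q \<and> (P = [] \<or> Q = [] \<or> hd P \<noteq> hd Q)"
proof (induction xs ys arbitrary: P Q rule: dcp.induct)
  case (1 x xs y ys)
  show ?case
  proof (cases "x = y")
    case True
    then obtain s where "xs = s @ P" "ys = s @ Q" "P = [] \<or> Q = [] \<or> hd P \<noteq> hd Q" using 1 by auto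
    then show ?thesis using True by (intro exI[of _ "x # s"]) auto
  next
    case False then show ?thesis using 1 by (intro exI[of _ "[]"]) auto
  qed
qed auto

definition redlist :: "nat list \<Rightarrow> nat list \<Rightarrow> nat list" where
  "redlist U V = (let r = dcp (rev U) (rev V) in rev (fst r) @ map ninv (snd r))"

lemma fmult_append: "fmult (a @ b) c = fmult a (fmult b c)"
  by (simp add: fmult_def)

lemma redlist_correct:
  assumes u: "reduced u" and v: "reduced v"
  shows "redlist (map lc u) (map lc v) = map lc (fmult u (finv v))"
proof -
  obtain P Q where PQ: "dcp (rev (map lc u)) (rev (map lc v)) = (P, Q)" by (cases "dcp (rev (map lc u)) (rev (map lc v))")
  then obtain s where s: "rev (map lc u) = s @ P" "rev (map lc v) = s @ Q" "P = [] \<or> Q = [] \<or> hd P \<noteq> hd Q"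
    using dcp_prop by blast
  define p where "p = map of_lc (rev P)"
  define q where "q = map of_lc (rev Q)"
  define t where "t = map of_lc (rev s)"
  have uu: "u = p @ t"
  proof -
    have "map lc u = rev P @ rev s" using arg_cong[OF s(1), of rev] by simp
    then have "map of_lc (map lc u) = map of_lc (rev P @ rev s)" by simp
    then show ?thesis unfolding p_def t_def by (simp add: comp_def)
  qed
  have vv: "v = q @ t"
  proof -
    have "map lc v = rev Q @ rev s" using arg_cong[OF s(2), of rev] by simp
    then have "map of_lc (map lc v) = map of_lc (rev Q @ rev s)" by simp
    then show ?thesis unfolding q_def t_def by (simp add: comp_def)
  qed
  have rp: "reduced p" using u uu by (simp add: reduced_append)
  have rq: "reduced q" using v vv by (simp add: reduced_append)
  have lastpq: "p = [] \<or> q = [] \<or> last p \<noteq> last q"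
  proof -
    have "P = [] \<or> Q = [] \<or> hd P \<noteq> hd Q" by (rule s(3))
    moreover have "P \<noteq> [] \<Longrightarrow> last p = of_lc (hd P)" unfolding p_def by (simp add: last_map last_rev)
    moreover have "Q \<noteq> [] \<Longrightarrow> last q = of_lc (hd Q)" unfolding q_def by (simp add: last_map last_rev)
    ultimately show ?thesis unfolding p_def q_def by (metis Nil_is_map_conv Nil_is_rev_conv lc_of_lc)
  qed
  have red: "reduced (p @ finv q)"
  proof -
    have "p = [] \<or> finv q = [] \<or> \<not> cancels (last p) (hd (finv q))"
    proof (cases "p = [] \<or> q = []")
      case True then show ?thesis by auto
    next
      case False
      then have "hd (finv q) = flip (last q)" by (simp add: finv_def hd_rev hd_map last_map)
      then show ?thesis using lastpq False by (auto simp: cancels_iff)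
    qed
    then show ?thesis using rp reduced_finv[OF rq] by (simp add: reduced_append)
  qed
  have "fmult u (finv v) = fmult p (fmult t (finv t @ finv q))" using uu vv by (simp add: fmult_append)
  also have "\<dots> = p @ finv q" by (simp add: fmult_cancel fmult_reduced_append[OF red])
  finally have fm: "fmult u (finv v) = p @ finv q" .
  have "map lc (p @ finv q) = rev P @ map ninv Q"
    unfolding p_def q_def finv_def by (simp add: map_lc_of_lc rev_map[symmetric] comp_def ninv_lc[symmetric])
  then show ?thesis unfolding fm redlist_def Let_def PQ by simp
qed


declare list_encode.simps(2)[simp del]

lemma crevmap_enc0: "crevmap f (list_encode xs) 0 = list_encode (rev (map f xs))"
  using crevmap_enc[of f xs "[]"] by simp

lemma c_ninv[intro]: "computable n a \<Longrightarrow> computable n (\<lambda>xs. ninv (a xs))"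
  unfolding ninv_def by (intro c_if cp_zero c_par c_add c_pred computable_const)

lemma c_ninv1: "computable 1 (\<lambda>v. ninv (v ! 0))" by (intro c_ninv c_proj) simp

definition redc :: "nat \<Rightarrow> nat \<Rightarrow> nat" where
  "redc cu cv = crevmap id (pfst (cdcp (crevmap id cu 0) (crevmap id cv 0)))
     (crevmap ninv (crevmap id (psnd (cdcp (crevmap id cu 0) (crevmap id cv 0))) 0) 0)"

lemma redc_enc: "redc (list_encode U) (list_encode V) = list_encode (redlist U V)"
  unfolding redc_def redlist_def Let_def crevmap_enc0 cdcp_enc pfst_pe psnd_pe
  by (simp add: crevmap_enc rev_map)

lemma redc_code: "reduced u \<Longrightarrow> reduced v \<Longrightarrow> redc (code u) (code v) = code (fmult u (finv v))"
  unfolding code_lc redc_enc by (simp add: redlist_correct)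

lemma c_redc[intro]: "computable n a \<Longrightarrow> computable n b \<Longrightarrow> computable n (\<lambda>xs. redc (a xs) (b xs))"
  unfolding redc_def using c_id1 c_ninv1
  by (intro c_crevmap c_pfst c_psnd c_cdcp computable_const) auto

lemma c_clk2[intro]: "computable n a \<Longrightarrow> computable n b \<Longrightarrow> computable n (\<lambda>xs. enc (clk f (a xs) [b xs]))"
proof -
  have c2: "computable 2 (\<lambda>zs. enc (clk f (hd zs) (tl zs)))" using c_clk[of 1 f] by (simp add: numeral_2_eq_2)
  have "computable 2 (\<lambda>v. enc (clk f (v ! 0) [v ! 1]))"
    by (rule computable_cong[OF c2]) (auto simp: length_Suc_conv numeral_2_eq_2)
  then show "computable n a \<Longrightarrow> computable n b \<Longrightarrow> computable n (\<lambda>xs. enc (clk f (a xs) [b xs]))"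
    by (rule computable_lift2)
qed

definition vstep :: "nat \<Rightarrow> nat \<Rightarrow> nat" where
  "vstep k st = (if pfst st = 0 then st else pe (ctl (pfst st))
     (if 2 * k \<le> chd (pfst st) \<or> (ctl (pfst st) \<noteq> 0 \<and> chd (ctl (pfst st)) = ninv (chd (pfst st))) then 1 else psnd st))"

lemma vstep_iter: "length ds \<le> m \<Longrightarrow>
  (vstep k ^^ m) (pe (list_encode ds) fl) = pe 0 (if vlist k ds then fl else 1)"
proof (induction ds arbitrary: m fl)
  case Nil
  have "(vstep k ^^ m) (pe 0 fl) = pe 0 fl" for m by (induction m) (auto simp: vstep_def)
  then show ?case by simp
next
  case (Cons d ds)
  then obtain m' where m: "m = Suc m'" "length ds \<le> m'" by (cases m) auto
  define fl' where "fl' = (if \<not> (d < 2 * k \<and> (ds = [] \<or> hd ds \<noteq> ninv d)) then 1 else fl)"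
  have st: "vstep k (pe (list_encode (d # ds)) fl) = pe (list_encode ds) fl'"
    unfolding vstep_def fl'_def by (cases ds) (auto simp: not_less)
  show ?case unfolding m(1) funpow_Suc_right comp_def st Cons.IH[OF m(2)] fl'_def by auto
qed

definition cvalid :: "nat \<Rightarrow> nat \<Rightarrow> bool" where
  "cvalid k c \<longleftrightarrow> psnd ((vstep k ^^ c) (pe c 0)) = 0"

lemma cvalid_iff: "cvalid k c \<longleftrightarrow> word c \<in> FX k"
proof -
  have "(vstep k ^^ c) (pe c 0) = pe 0 (if vlist k (list_decode c) then 0 else 1)"
    using vstep_iter[of "list_decode c" c k 0] length_le_enc[of "list_decode c"] by simp
  then show ?thesis unfolding cvalid_def valid_word[symmetric] by simp
qed

lemma cp_cvalid[intro]: "computable n a \<Longrightarrow> cpred n (\<lambda>xs. cvalid k (a xs))"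
proof -
  have "computable 1 (\<lambda>v. vstep k (v ! 0))" unfolding vstep_def
    by (intro c_if cp_or cp_and cp_not cp_zero cp_le cp_eq c_pfst c_psnd c_pe c_ctl c_chd c_ninv c_mult c_proj computable_const) auto
  then show "computable n a \<Longrightarrow> cpred n (\<lambda>xs. cvalid k (a xs))"
    unfolding cvalid_def by (intro cp_zero c_psnd c_funpow_base c_pe computable_const)
qed

definition okc :: "recf \<Rightarrow> nat \<Rightarrow> nat \<Rightarrow> bool" where
  "okc f t x \<longleftrightarrow> 2 \<le> enc (clk f t [x])"

definition cstep :: "recf \<Rightarrow> nat \<Rightarrow> nat" where
  "cstep f st = (if pfst st = 0 then st else pe (ctl (pfst st))
     (pe (if 2 \<le> enc (clk f (psnd (psnd (psnd st))) [redc (pfst (psnd (psnd st))) (chd (pfst st))]) then pfst (psnd st) else 1)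
         (psnd (psnd st))))"

lemma cstep_iter: "length ls \<le> m \<Longrightarrow>
  (cstep f ^^ m) (pe (list_encode ls) (pe fl (pe c t))) =
   pe 0 (pe (if \<forall>l\<in>set ls. okc f t (redc c l) then fl else 1) (pe c t))"
proof (induction ls arbitrary: m fl)
  case Nil
  have "(cstep f ^^ m) (pe 0 x) = pe 0 x" for m x by (induction m) (auto simp: cstep_def)
  then show ?case by simp
next
  case (Cons l ls)
  then obtain m' where m: "m = Suc m'" "length ls \<le> m'" by (cases m) auto
  define fl' where "fl' = (if okc f t (redc c l) then fl else 1)"
  have st: "cstep f (pe (list_encode (l # ls)) (pe fl (pe c t))) = pe (list_encode ls) (pe fl' (pe c t))"
    unfolding cstep_def fl'_def okc_def by simp
  show ?case unfolding m(1) funpow_Suc_right comp_def st Cons.IH[OF m(2)] fl'_def by auto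
qed

definition ccert :: "recf \<Rightarrow> nat \<Rightarrow> nat \<Rightarrow> nat \<Rightarrow> nat \<Rightarrow> bool" where
  "ccert f k L c t \<longleftrightarrow> cvalid k c \<and> pfst (psnd ((cstep f ^^ L) (pe L (pe 0 (pe c t))))) = 0"

lemma ccert_iff: "ccert f k (list_encode ls) c t \<longleftrightarrow> word c \<in> FX k \<and> (\<forall>l\<in>set ls. okc f t (redc c l))"
proof -
  have "(cstep f ^^ list_encode ls) (pe (list_encode ls) (pe 0 (pe c t))) =
     pe 0 (pe (if \<forall>l\<in>set ls. okc f t (redc c l) then 0 else 1) (pe c t))"
    by (rule cstep_iter[OF length_le_enc])
  then show ?thesis unfolding ccert_def cvalid_iff by simp
qed

lemma cp_ccert[intro]: "computable n L \<Longrightarrow> computable n c \<Longrightarrow> computable n t \<Longrightarrow>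
   cpred n (\<lambda>xs. ccert f k (L xs) (c xs) (t xs))"
proof -
  have "computable 1 (\<lambda>v. cstep f (v ! 0))" unfolding cstep_def
    by (intro c_if cp_zero cp_le c_clk2 c_redc c_pfst c_psnd c_pe c_ctl c_chd c_proj computable_const) auto
  then show "computable n L \<Longrightarrow> computable n c \<Longrightarrow> computable n t \<Longrightarrow>
   cpred n (\<lambda>xs. ccert f k (L xs) (c xs) (t xs))"
    unfolding ccert_def by (intro cp_and cp_cvalid cp_zero c_pfst c_psnd c_funpow_base c_pe computable_const)
qed

definition gstep :: "recf \<Rightarrow> nat \<Rightarrow> nat \<Rightarrow> nat \<Rightarrow> nat" where
  "gstep f k s L = (if ccert f k L (pfst s) (psnd s) then ccons (pfst s) L else L)"

definition Lst :: "recf \<Rightarrow> nat \<Rightarrow> nat \<Rightarrow> nat" where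
  "Lst f k s = rec_nat (list_encode [0]) (\<lambda>i L. gstep f k i L) s"

definition Fout :: "recf \<Rightarrow> nat \<Rightarrow> nat \<Rightarrow> nat" where
  "Fout f k s = chd (Lst f k s)"

lemma c_Fout: "computable 1 (\<lambda>v. Fout f k (v ! 0))"
  unfolding Fout_def Lst_def gstep_def
  by (intro c_chd c_rec2 c_if cp_ccert c_ccons c_pfst c_psnd c_proj computable_const) auto


declare list_encode.simps(2)[simp del]

primrec Ls :: "recf \<Rightarrow> nat \<Rightarrow> nat \<Rightarrow> nat list" where
  "Ls f k 0 = [0]"
| "Ls f k (Suc s) = (if word (pfst s) \<in> FX k \<and> (\<forall>l\<in>set (Ls f k s). okc f (psnd s) (redc (pfst s) l))
     then pfst s # Ls f k s else Ls f k s)"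

lemma Lst_Ls: "Lst f k s = list_encode (Ls f k s)"
proof (induction s)
  case 0 then show ?case by (simp add: Lst_def)
next
  case (Suc s)
  have "Lst f k (Suc s) = gstep f k s (Lst f k s)" by (simp add: Lst_def)
  also have "\<dots> = list_encode (Ls f k (Suc s))"
    unfolding Suc gstep_def ccert_iff by simp
  finally show ?case .
qed

lemma Ls_ne: "Ls f k s \<noteq> []" by (induction s) auto

lemma Fout_Ls: "Fout f k s = hd (Ls f k s)"
proof -
  obtain a as where "Ls f k s = a # as" using Ls_ne[of f k s] by (cases "Ls f k s") auto
  then show ?thesis by (simp add: Fout_def Lst_Ls)
qed

lemma Ls_mono_Suc: "set (Ls f k s) \<subseteq> set (Ls f k (Suc s))" by auto

lemma Ls_mono: "s \<le> s' \<Longrightarrow> set (Ls f k s) \<subseteq> set (Ls f k s')"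
  by (rule lift_Suc_mono_le[of "\<lambda>s. set (Ls f k s)"]) (rule Ls_mono_Suc)

lemma Ls_len_mono: "s \<le> s' \<Longrightarrow> length (Ls f k s) \<le> length (Ls f k s')"
  by (rule lift_Suc_mono_le[of "\<lambda>s. length (Ls f k s)"]) auto

lemma Ls_hd: "c \<in> set (Ls f k s) \<Longrightarrow> \<exists>n. hd (Ls f k n) = c"
proof (induction s)
  case 0 then show ?case by (intro exI[of _ 0]) auto
next
  case (Suc s)
  then show ?case by (auto split: if_splits intro: exI[of _ "Suc s"])
qed

lemma finite_max_time_set:
  fixes Q :: "'b \<Rightarrow> nat \<Rightarrow> bool"
  assumes "finite A" "\<forall>a\<in>A. \<exists>t. \<forall>t'\<ge>t. Q a t'"
  shows "\<exists>T. \<forall>a\<in>A. \<forall>t'\<ge>T. Q a t'"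
  using assms
proof (induction A rule: finite_induct)
  case empty then show ?case by auto
next
  case (insert x F)
  then obtain T where T: "\<forall>a\<in>F. \<forall>t'\<ge>T. Q a t'" by auto
  obtain t where t: "\<forall>t'\<ge>t. Q x t'" using insert.prems by auto
  show ?case by (rule exI[of _ "max T t"]) (use T t in auto)
qed

context
  fixes G (structure) and g :: "nat \<Rightarrow> 'a" and k :: nat and S :: "letter list set" and f :: recf
  assumes grp: "group G" and gk: "g ` {..<k} \<subseteq> carrier G"
    and gen: "generate G (g ` {..<k}) = carrier G"
    and inf: "infinite (carrier G)"
    and SFX: "S \<subseteq> FX k"
    and halt: "\<forall>w\<in>S. \<exists>y. ev f [code w] y"
    and corr: "\<forall>w\<in>FX k. \<forall>y. ev f [code w] y \<longrightarrow> (y = 0 \<longleftrightarrow> piG G g w = \<one>)"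
    and dens: "\<forall>\<delta>>0. \<forall>N. \<exists>n\<ge>N. \<exists>\<omega>\<in>FX k. real (card (S \<inter> fmult \<omega> ` ballF k n)) > (1 - \<delta>) * real (card (ballF k n))"
begin

interpretation group G by (rule grp)

lemma okc_distinct:
  assumes c: "word c \<in> FX k" and l: "word l \<in> FX k" and ok: "okc f t (redc c l)"
  shows "piG G g (word c) \<noteq> piG G g (word l)"
proof
  assume eq: "piG G g (word c) = piG G g (word l)"
  let ?z = "fmult (word c) (finv (word l))"
  have zF: "?z \<in> FX k" using c l by (intro FX_fmult FX_finv)
  have rc: "redc c l = code ?z"
    using redc_code[of "word c" "word l"] c l by (simp add: FX_def)
  obtain y where y: "clk f t [code ?z] = Some y" "y \<noteq> 0"
    using ok unfolding okc_def rc by (cases "clk f t [code ?z]") auto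
  have ev: "ev f [code ?z] y" using clk_sound[OF y(1)] .
  have "piG G g ?z = piG G g (word c) \<otimes> inv (piG G g (word l))"
    using piG_FX_fmult[OF grp gk c FX_finv[OF l]] piG_finv[OF grp gk gen inf SFX halt corr dens l] by simp
  also have "\<dots> = \<one>" using eq piG_FX_carrier[OF grp gk l] by simp
  finally have "y = 0" using corr zF ev by blast
  then show False using y(2) by simp
qed

lemma Ls_inv: "(\<forall>c\<in>set (Ls f k s). word c \<in> FX k) \<and> distinct (Ls f k s) \<and>
  (\<forall>c\<in>set (Ls f k s). \<forall>c'\<in>set (Ls f k s). piG G g (word c) = piG G g (word c') \<longrightarrow> c = c')"
proof (induction s)
  case 0
  have "word 0 = []" by (simp add: word_def)
  then show ?case by simp
next
  case (Suc s)
  show ?case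
  proof (cases "word (pfst s) \<in> FX k \<and> (\<forall>l\<in>set (Ls f k s). okc f (psnd s) (redc (pfst s) l))")
    case True
    have d: "piG G g (word (pfst s)) \<noteq> piG G g (word l)" if "l \<in> set (Ls f k s)" for l
      using okc_distinct[of "pfst s" l "psnd s"] True that Suc by blast
    then have ni: "pfst s \<notin> set (Ls f k s)" by blast
    have eq: "Ls f k (Suc s) = pfst s # Ls f k s" using True by simp
    have d2: "piG G g (word l) \<noteq> piG G g (word (pfst s))" if "l \<in> set (Ls f k s)" for l
      using d[OF that] by metis
    show ?thesis unfolding eq using True Suc ni d d2 by auto
  next
    case False
    then have eq: "Ls f k (Suc s) = Ls f k s" unfolding Ls.simps(2) by (rule if_not_P)
    show ?thesis unfolding eq by (rule Suc)
  qed
qed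

lemma Ls_unbounded: "\<exists>s. M < length (Ls f k s)"
proof (rule ccontr)
  assume "\<not> ?thesis"
  then have bnd: "\<forall>s. length (Ls f k s) \<le> M" by (meson not_less)
  define A where "A = (\<lambda>s. length (Ls f k s)) ` UNIV"
  have "A \<subseteq> {..M}" using bnd unfolding A_def by auto
  then have finA: "finite A" by (rule finite_subset) simp
  have Ane: "A \<noteq> {}" unfolding A_def by simp
  have "Max A \<in> A" by (rule Max_in[OF finA Ane])
  then obtain s0 where s0: "length (Ls f k s0) = Max A" unfolding A_def by (metis imageE)
  have maxle: "length (Ls f k s) \<le> length (Ls f k s0)" for s
  proof -
    have "length (Ls f k s) \<in> A" unfolding A_def by simp
    then show ?thesis using Max_ge[OF finA] s0 by simp
  qed
  have const: "Ls f k s = Ls f k s0" if "s0 \<le> s" for s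
    using that
  proof (induction s)
    case 0 then show ?case by simp
  next
    case (Suc s)
    show ?case
    proof (cases "s0 \<le> s")
      case True
      then have IH: "Ls f k s = Ls f k s0" using Suc.IH by simp
      have le: "length (Ls f k (Suc s)) \<le> length (Ls f k s)" using maxle[of "Suc s"] IH by simp
      have "Ls f k (Suc s) = Ls f k s"
      proof (cases "word (pfst s) \<in> FX k \<and> (\<forall>l\<in>set (Ls f k s). okc f (psnd s) (redc (pfst s) l))")
        case True
        then have "Ls f k (Suc s) = pfst s # Ls f k s" unfolding Ls.simps(2) by (rule if_P)
        then show ?thesis using le by simp
      next
        case False then show ?thesis unfolding Ls.simps(2) by (rule if_not_P)
      qed
      then show ?thesis using IH by simp
    next
      case False then have "s0 = Suc s" using Suc.prems by simp
      then show ?thesis by simp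
    qed
  qed
  let ?L = "Ls f k s0"
  have LF: "set (map word ?L) \<subseteq> FX k" using Ls_inv[of s0] by auto
  obtain w where w: "w \<in> FX k" "\<forall>l\<in>set (map word ?L). \<exists>y. ev f [code (fmult w (finv l))] y \<and> y \<noteq> 0"
    using good_exists[OF grp gk gen inf SFX halt corr dens LF] by blast
  have "\<forall>l\<in>set ?L. \<exists>t. \<forall>t'\<ge>t. okc f t' (redc (code w) l)"
  proof
    fix l assume l: "l \<in> set ?L"
    have lF: "word l \<in> FX k" using Ls_inv[of s0] l by auto
    obtain y where y: "ev f [code (fmult w (finv (word l)))] y" "y \<noteq> 0" using w(2) l by auto
    obtain t where t: "clk f t [code (fmult w (finv (word l)))] = Some y" using clk_complete[OF y(1)] by blast
    have rc: "redc (code w) l = code (fmult w (finv (word l)))"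
      using redc_code[of w "word l"] w(1) lF by (simp add: FX_def)
    show "\<exists>t. \<forall>t'\<ge>t. okc f t' (redc (code w) l)"
    proof (intro exI allI impI)
      fix t' assume "t \<le> t'"
      then have "clk f t' [code (fmult w (finv (word l)))] = Some y" by (intro clk_mono[OF t])
      then show "okc f t' (redc (code w) l)" unfolding okc_def rc using y(2) by simp
    qed
  qed
  from finite_max_time_set[of "set ?L" "\<lambda>l t. okc f t (redc (code w) l)", OF finite_set this]
  obtain T where T: "\<forall>l\<in>set ?L. \<forall>t'\<ge>T. okc f t' (redc (code w) l)" by blast
  define s where "s = pe (code w) (T + s0)"
  have ss: "pfst s = code w" "psnd s = T + s0" unfolding s_def by simp_all
  have "T + s0 \<le> s" unfolding s_def pe_def by (rule le_prod_encode_2)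
  then have s0s: "s0 \<le> s" by simp
  have cond: "word (pfst s) \<in> FX k \<and> (\<forall>l\<in>set (Ls f k s). okc f (psnd s) (redc (pfst s) l))"
    unfolding ss const[OF s0s] using T w(1) by simp
  have "Ls f k (Suc s) = pfst s # Ls f k s"
    unfolding Ls.simps(2) by (rule if_P[OF cond])
  moreover have "Ls f k (Suc s) = Ls f k s" using const[OF s0s] const[of "Suc s"] s0s by simp
  ultimately show False by (metis list.distinct(1) list.inject not_Cons_self)
qed

theorem core: "\<not> algorithmically_finite G k g"
proof -
  obtain e where e: "\<forall>xs. length xs = 1 \<longrightarrow> ev e xs (Fout f k (xs ! 0))"
    using c_Fout[of f k] unfolding computable_def by blast
  have ev: "ev e [n] (Fout f k n)" for n using e[rule_format, of "[n]"] by simp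
  define C where "C = (\<Union>s. set (Ls f k s))"
  define S' where "S' = word ` C"
  have codeS': "code ` S' = C" unfolding S'_def by (auto simp: image_image)
  have S'F: "S' \<subseteq> FX k" unfolding S'_def C_def using Ls_inv by blast
  have range: "{y. \<exists>n. ev e [n] y} = code ` S'"
  proof -
    have "{y. \<exists>n. ev e [n] y} = range (Fout f k)"
    proof
      show "{y. \<exists>n. ev e [n] y} \<subseteq> range (Fout f k)"
      proof
        fix y assume "y \<in> {y. \<exists>n. ev e [n] y}"
        then obtain n where "ev e [n] y" by blast
        then have "y = Fout f k n" using ev_det[OF _ ev[of n]] by blast
        then show "y \<in> range (Fout f k)" by blast
      qed
      show "range (Fout f k) \<subseteq> {y. \<exists>n. ev e [n] y}" using ev by blast
    qed
    also have "\<dots> = C"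
    proof
      show "range (Fout f k) \<subseteq> C" unfolding C_def Fout_Ls
        using Ls_ne by (auto intro: hd_in_set)
      show "C \<subseteq> range (Fout f k)" unfolding C_def Fout_Ls using Ls_hd by blast
    qed
    finally show ?thesis using codeS' by simp
  qed
  have inj: "inj_on (piG G g) S'"
  proof (rule inj_onI)
    fix w w' assume w: "w \<in> S'" "w' \<in> S'" and eq: "piG G g w = piG G g w'"
    obtain c s c' s' where cs: "w = word c" "c \<in> set (Ls f k s)" "w' = word c'" "c' \<in> set (Ls f k s')"
      using w unfolding S'_def C_def by auto
    have "c \<in> set (Ls f k (max s s'))" "c' \<in> set (Ls f k (max s s'))"
      using cs Ls_mono[of s "max s s'" f k] Ls_mono[of s' "max s s'" f k] by auto
    then have "c = c'" using Ls_inv[of "max s s'"] eq cs by blast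
    then show "w = w'" using cs by simp
  qed
  have infS': "infinite S'"
  proof
    assume fin: "finite S'"
    then have finC: "finite C" using codeS' by (metis finite_imageI)
    obtain s where s: "card C < length (Ls f k s)" using Ls_unbounded by blast
    have "length (Ls f k s) = card (set (Ls f k s))" using Ls_inv[of s] by (simp add: distinct_card)
    also have "\<dots> \<le> card C" unfolding C_def by (rule card_mono[OF finC[unfolded C_def]]) auto
    finally show False using s by simp
  qed
  have "\<exists>f S. S \<subseteq> FX k \<and> infinite S \<and> inj_on (piG G g) S \<and>
             (\<forall>n. \<exists>y. ev f [n] y) \<and> {y. \<exists>n. ev f [n] y} = code ` S"
  proof (intro exI conjI)
    show "\<forall>n. \<exists>y. ev e [n] y" using ev by blast
  qed (rule S'F, rule infS', rule inj, rule range)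
  then show ?thesis unfolding algorithmically_finite_def by blast
qed

end


lemma UB_dens:
  assumes "UB_generic k S"
  shows "\<forall>\<delta>>0. \<forall>N. \<exists>n\<ge>N. \<exists>\<omega>\<in>FX k. real (card (S \<inter> fmult \<omega> ` ballF k n)) > (1 - \<delta>) * real (card (ballF k n))"
proof (rule ccontr)
  assume "\<not> ?thesis"
  then obtain \<delta> N where \<delta>: "\<delta> > 0" and
    le: "\<forall>n\<ge>N. \<forall>\<omega>\<in>FX k. real (card (S \<inter> fmult \<omega> ` ballF k n)) \<le> (1 - \<delta>) * real (card (ballF k n))"
    by (auto simp: not_less)
  define X where "X n = (SUP \<omega>\<in>FX k. ereal (real (card (S \<inter> fmult \<omega> ` ballF k n)) / real (card (ballF k n))))" for n
  have "X n \<le> ereal (1 - \<delta>)" if n: "n \<ge> N" for n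
    unfolding X_def
  proof (rule SUP_least)
    fix \<omega> assume \<omega>: "\<omega> \<in> FX k"
    have pos: "real (card (ballF k n)) > 0" using card_ballF_pos by simp
    have "real (card (S \<inter> fmult \<omega> ` ballF k n)) / real (card (ballF k n)) \<le> 1 - \<delta>"
      using le n \<omega> pos by (simp add: pos_divide_le_eq)
    then show "ereal (real (card (S \<inter> fmult \<omega> ` ballF k n)) / real (card (ballF k n))) \<le> ereal (1 - \<delta>)"
      by simp
  qed
  then have "limsup X \<le> ereal (1 - \<delta>)"
    by (intro Limsup_bounded) (auto simp: eventually_sequentially)
  moreover have "limsup X = 1" using assms unfolding UB_generic_def X_def by simp
  ultimately show False using \<delta> by simp
qed

lemma gen_dens:
  assumes "generic k S"
  shows "\<forall>\<delta>>0. \<forall>N. \<exists>n\<ge>N. \<exists>\<omega>\<in>FX k. real (card (S \<inter> fmult \<omega> ` ballF k n)) > (1 - \<delta>) * real (card (ballF k n))"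
proof (intro allI impI)
  fix \<delta> :: real and N :: nat assume \<delta>: "\<delta> > 0"
  have SF: "S \<subseteq> FX k" and lim: "(\<lambda>n. real (card ((FX k - S) \<inter> ballF k n)) / real (card (ballF k n))) \<longlonglongrightarrow> 0"
    using assms unfolding generic_def by auto
  have "eventually (\<lambda>n. real (card ((FX k - S) \<inter> ballF k n)) / real (card (ballF k n)) < \<delta>) sequentially"
    using order_tendstoD(2)[OF lim \<delta>] .
  then obtain M where M: "\<forall>n\<ge>M. real (card ((FX k - S) \<inter> ballF k n)) / real (card (ballF k n)) < \<delta>"
    by (auto simp: eventually_sequentially)
  define n where "n = max N M"
  have pos: "real (card (ballF k n)) > 0" using card_ballF_pos by simp
  have lt: "real (card ((FX k - S) \<inter> ballF k n)) < \<delta> * real (card (ballF k n))"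
  proof -
    have "real (card ((FX k - S) \<inter> ballF k n)) / real (card (ballF k n)) < \<delta>"
      using M unfolding n_def by simp
    then show ?thesis using pos by (simp add: pos_divide_less_eq)
  qed
  have BF: "ballF k n \<subseteq> FX k" by (auto simp: ballF_def)
  have un: "ballF k n = (S \<inter> ballF k n) \<union> ((FX k - S) \<inter> ballF k n)" using BF by auto
  have "card (ballF k n) = card (S \<inter> ballF k n) + card ((FX k - S) \<inter> ballF k n)"
    by (subst un, rule card_Un_disjoint) (use finite_ballF in auto)
  then have "real (card (S \<inter> ballF k n)) > (1 - \<delta>) * real (card (ballF k n))"
    using lt by (simp add: algebra_simps)
  moreover have "fmult [] ` ballF k n = ballF k n" by simp
  ultimately show "\<exists>n\<ge>N. \<exists>\<omega>\<in>FX k. real (card (S \<inter> fmult \<omega> ` ballF k n)) > (1 - \<delta>) * real (card (ballF k n))"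
    unfolding n_def by (intro exI[of _ "max N M"] conjI bexI[of _ "[]"]) auto
qed

theorem corollary4p3:
  fixes G :: "('a, 'b) monoid_scheme" and k :: nat and g :: "nat \<Rightarrow> 'a"
  assumes "group G"
    and "infinite (carrier G)"
    and "g ` {..<k} \<subseteq> carrier G"
    and "generate G (g ` {..<k}) = carrier G"
    and "algorithmically_finite G k g"
  shows "\<not> UB_generic_WP_solvable G k g \<and> \<not> generic_WP_solvable G k g"
proof
  show "\<not> UB_generic_WP_solvable G k g"
  proof
    assume "UB_generic_WP_solvable G k g"
    then obtain S f where S: "UB_generic k S" and h: "\<forall>w\<in>S. \<exists>y. ev f [code w] y"
      and c: "\<forall>w\<in>FX k. \<forall>y. ev f [code w] y \<longrightarrow> (y = 0 \<longleftrightarrow> piG G g w = \<one>\<^bsub>G\<^esub>)"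
      unfolding UB_generic_WP_solvable_def WP_solvable_on_def by blast
    have SF: "S \<subseteq> FX k" using S unfolding UB_generic_def by simp
    show False using core[OF assms(1,3,4,2) SF h c UB_dens[OF S]] assms(5) by simp
  qed
  show "\<not> generic_WP_solvable G k g"
  proof
    assume "generic_WP_solvable G k g"
    then obtain S f where S: "generic k S" and h: "\<forall>w\<in>S. \<exists>y. ev f [code w] y"
      and c: "\<forall>w\<in>FX k. \<forall>y. ev f [code w] y \<longrightarrow> (y = 0 \<longleftrightarrow> piG G g w = \<one>\<^bsub>G\<^esub>)"
      unfolding generic_WP_solvable_def WP_solvable_on_def by blast
    have SF: "S \<subseteq> FX k" using S unfolding generic_def by simp
    show False using core[OF assms(1,3,4,2) SF h c gen_dens[OF S]] assms(5) by simp
  qed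
qed


end
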